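(* (a) Let $g\in\mathbb Q(x)$ be a rational function with rational coefficients that is defined on $(0,1)$ and satisfies $0<g(p)<1/2$ for all $p\in(0,1)$. Then there is a pushdown automaton that simulates the function $\gamma(p)=\dfrac{1-\sqrt{1-2g(p)}}{2g(p)}$ on $(0,1)$. (b) There is a pushdown automaton that simulates $f(p)=\sqrt p$ on $(0,1)$.
   Context: For $w\in\{0,1\}^*$ let $n_i(w)$ be the number of $i$'s in $w$; $\mathbf P_p[w]=p^{n_1(w)}(1-p)^{n_0(w)}$, $\mathbf P_p[L]=\sum_{w\in L}\mathbf P_p[w]$. A simulation of $f:\mathcal D\to[0,1]$ ($\mathcal D\subseteq(0,1)$) is a pair of disjoint languages $L_0,L_1\subseteq\{0,1\}^*$ with $L_0\cup L_1$ prefix-free such that $\mathbf P_p[L_0\cup L_1]=1$ and $\mathbf P_p[L_1]=f(p)$ for all $p\in\mathcal D$. A (deterministic) pushdown automaton over input alphabet $\{0,1\}$ consists of a finite state set $S$ with start state $s_0$, a finite stack alphabet $\Lambda$, a nonempty initial stack word $\tau$ (leftmost symbol on top), a transition map assigning to each $(s,x,b)\in S\times\{0,1\}\times\Lambda$ a new state $\sigma(s,x,b)$ and a word $\rho(s,x,b)\in\Lambda^*$ replacing the top symbol $b$, and disjoint sets $S_0,S_1\subseteq S$. It reads one bit per step, stops when the stack becomes empty, and outputs $i$ if it is then in a state of $S_i$; $L_i$ is the set of input strings after whose last symbol the stack first becomes empty in a state of $S_i$. It simulates $f$ if $(L_0,L_1)$ is a simulation of $f$. *)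

theory Defs
  imports "HOL-Analysis.Analysis" "HOL-Computational_Algebra.Polynomial"
begin

text \<open>Words over {0,1} are bool lists; True stands for the bit 1.\<close>

definition n1 :: "bool list \<Rightarrow> nat" where
  "n1 w = length (filter (\<lambda>x. x) w)"

definition n0 :: "bool list \<Rightarrow> nat" where
  "n0 w = length (filter (\<lambda>x. \<not> x) w)"

definition Pword :: "real \<Rightarrow> bool list \<Rightarrow> real" where
  "Pword p w = p ^ n1 w * (1 - p) ^ n0 w"

definition Plang :: "real \<Rightarrow> bool list set \<Rightarrow> real" where
  "Plang p L = infsum (Pword p) L"

definition prefix_free :: "bool list set \<Rightarrow> bool" where
  "prefix_free L \<longleftrightarrow> (\<forall>u\<in>L. \<forall>v\<in>L. (\<exists>z. v = u @ z) \<longrightarrow> u = v)"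

definition is_simulation ::
  "bool list set \<Rightarrow> bool list set \<Rightarrow> (real \<Rightarrow> real) \<Rightarrow> real set \<Rightarrow> bool" where
  "is_simulation L0 L1 f D \<longleftrightarrow>
     L0 \<inter> L1 = {} \<and> prefix_free (L0 \<union> L1) \<and>
     (\<forall>p\<in>D. Plang p (L0 \<union> L1) = 1 \<and> Plang p L1 = f p)"

text \<open>Stack words are lists,
  head = top of stack.\<close>

record pda =
  states :: "nat set"
  start :: nat
  stack_alph :: "nat set"
  init_stack :: "nat list"
  trans_state :: "nat \<Rightarrow> bool \<Rightarrow> nat \<Rightarrow> nat"
  trans_push :: "nat \<Rightarrow> bool \<Rightarrow> nat \<Rightarrow> nat list"
  out0 :: "nat set"
  out1 :: "nat set"

definition wf_pda :: "pda \<Rightarrow> bool" where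
  "wf_pda M \<longleftrightarrow>
     finite (states M) \<and> finite (stack_alph M) \<and>
     start M \<in> states M \<and>
     init_stack M \<noteq> [] \<and> set (init_stack M) \<subseteq> stack_alph M \<and>
     (\<forall>s\<in>states M. \<forall>x. \<forall>b\<in>stack_alph M.
        trans_state M s x b \<in> states M \<and> set (trans_push M s x b) \<subseteq> stack_alph M) \<and>
     out0 M \<subseteq> states M \<and> out1 M \<subseteq> states M \<and> out0 M \<inter> out1 M = {}"

text \<open>Running the automaton on a word from a configuration (state, stack).
  Once the stack is empty the machine has stopped and the configuration is frozen.\<close>

fun run :: "pda \<Rightarrow> nat \<times> nat list \<Rightarrow> bool list \<Rightarrow> nat \<times> nat list" where
  "run M c [] = c"
| "run M (s, []) (x # w) = (s, [])"
| "run M (s, b # r) (x # w) =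
     run M (trans_state M s x b, trans_push M s x b @ r) w"

definition pda_lang :: "pda \<Rightarrow> nat set \<Rightarrow> bool list set" where
  "pda_lang M F = {w. snd (run M (start M, init_stack M) w) = [] \<and>
      (\<forall>k < length w. snd (run M (start M, init_stack M) (take k w)) \<noteq> []) \<and>
      fst (run M (start M, init_stack M) w) \<in> F}"

definition pda_simulates :: "pda \<Rightarrow> (real \<Rightarrow> real) \<Rightarrow> real set \<Rightarrow> bool" where
  "pda_simulates M f D \<longleftrightarrow> is_simulation (pda_lang M (out0 M)) (pda_lang M (out1 M)) f D"

end

theory Submission
  imports Defs
begin

definition words :: "nat \<Rightarrow> bool list set" where
  "words n = {w. length w = n}"

lemma finite_words[simp]: "finite (words n)"
  unfolding words_def using finite_lists_length_eq[of "UNIV::bool set" n] by simp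

lemma words_Suc: "words (Suc n) = Cons True ` words n \<union> Cons False ` words n"
  unfolding words_def
proof (intro set_eqI iffI)
  fix w :: "bool list" assume "w \<in> {w. length w = Suc n}"
  then obtain x v where "w = x # v" "length v = n" by (cases w) auto
  then show "w \<in> Cons True ` {w. length w = n} \<union> Cons False ` {w. length w = n}"
    by (cases x) auto
qed auto

lemma sum_words_Suc:
  "(\<Sum>w\<in>words (Suc n). h w) = (\<Sum>w\<in>words n. h (True # w)) + (\<Sum>w\<in>words n. h (False # w))"
proof -
  have "(\<Sum>w\<in>words (Suc n). h w) = (\<Sum>w\<in>Cons True ` words n. h w) + (\<Sum>w\<in>Cons False ` words n. h w)"
    unfolding words_Suc by (rule sum.union_disjoint) auto
  also have "\<dots> = (\<Sum>w\<in>words n. h (True # w)) + (\<Sum>w\<in>words n. h (False # w))"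
    by (simp add: sum.reindex)
  finally show ?thesis .
qed

lemma Pword_Nil[simp]: "Pword p [] = 1"
  by (simp add: Pword_def n1_def n0_def)

lemma Pword_Cons: "Pword p (x # w) = (if x then p else 1 - p) * Pword p w"
  by (simp add: Pword_def n1_def n0_def)

lemma Pword_nonneg: "0 \<le> p \<Longrightarrow> p \<le> 1 \<Longrightarrow> 0 \<le> Pword p w"
  by (simp add: Pword_def)

lemma sum_Pword_words: "(\<Sum>w\<in>words n. Pword p w) = 1"
proof (induction n)
  case 0
  have "words 0 = {[]}" by (auto simp: words_def)
  then show ?case by simp
next
  case (Suc n)
  then show ?case
    by (simp add: sum_words_Suc Pword_Cons sum_distrib_left[symmetric])
qed

lemma run_halted[simp]: "run M (s, []) w = (s, [])"
  by (cases w) auto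

lemma run_append: "run M c (u @ v) = run M (run M c u) v"
proof (induction u arbitrary: c)
  case Nil then show ?case by simp
next
  case (Cons x u)
  obtain s st where c: "c = (s, st)" by force
  show ?case
  proof (cases st)
    case Nil then show ?thesis using c by simp
  next
    case (Cons b r) then show ?thesis using c Cons.IH by simp
  qed
qed

definition step :: "pda \<Rightarrow> nat \<times> nat list \<Rightarrow> bool \<Rightarrow> nat \<times> nat list" where
  "step M c x = run M c [x]"

lemma run_Cons: "run M c (x # w) = run M (step M c x) w"
  using run_append[of M c "[x]" w] by (simp add: step_def)


definition EE :: "pda \<Rightarrow> real \<Rightarrow> nat \<Rightarrow> nat \<times> nat list \<Rightarrow> (nat \<times> nat list \<Rightarrow> real) \<Rightarrow> real" where
  "EE M p n c f = (\<Sum>w\<in>words n. Pword p w * f (run M c w))"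

lemma Ex_0[simp]: "EE M p 0 c f = f c"
proof -
  have "words 0 = {[]}" by (auto simp: words_def)
  then show ?thesis by (simp add: EE_def)
qed

lemma Ex_Suc: "EE M p (Suc n) c f = p * EE M p n (step M c True) f + (1 - p) * EE M p n (step M c False) f"
proof -
  have "EE M p (Suc n) c f = (\<Sum>w\<in>words n. Pword p (True # w) * f (run M c (True # w))) +
     (\<Sum>w\<in>words n. Pword p (False # w) * f (run M c (False # w)))"
    unfolding EE_def by (rule sum_words_Suc)
  also have "\<dots> = (\<Sum>w\<in>words n. p * (Pword p w * f (run M (step M c True) w))) +
     (\<Sum>w\<in>words n. (1 - p) * (Pword p w * f (run M (step M c False) w)))"
    by (intro arg_cong2[where f="(+)"] sum.cong refl) (simp_all add: Pword_Cons run_Cons)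
  finally show ?thesis by (simp add: EE_def sum_distrib_left)
qed

lemma Ex_add: "EE M p (n + m) c f = EE M p n c (\<lambda>c'. EE M p m c' f)"
proof (induction n arbitrary: c)
  case 0 then show ?case by simp
next
  case (Suc n) then show ?case by (simp add: Ex_Suc)
qed

lemma Ex_const: "EE M p n c (\<lambda>_. a) = a"
  unfolding EE_def by (simp add: sum_distrib_right[symmetric] sum_Pword_words)

lemma Ex_mono:
  assumes "0 \<le> p" "p \<le> 1" "\<And>w. length w = n \<Longrightarrow> f (run M c w) \<le> g (run M c w)"
  shows "EE M p n c f \<le> EE M p n c g"
  unfolding EE_def using assms
  by (intro sum_mono mult_left_mono) (auto simp: words_def Pword_nonneg)

lemma Ex_cong:
  assumes "\<And>w. length w = n \<Longrightarrow> f (run M c w) = g (run M c w)"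
  shows "EE M p n c f = EE M p n c g"
  unfolding EE_def using assms by (intro sum.cong) (auto simp: words_def)

lemma Ex_plus: "EE M p n c (\<lambda>x. f x + g x) = EE M p n c f + EE M p n c g"
  unfolding EE_def by (simp add: distrib_left sum.distrib)

lemma Ex_cmult: "EE M p n c (\<lambda>x. a * f x) = a * EE M p n c f"
  unfolding EE_def by (simp add: sum_distrib_left mult.left_commute)

lemma Ex_diff: "EE M p n c (\<lambda>x. f x - g x) = EE M p n c f - EE M p n c g"
  unfolding EE_def by (simp add: right_diff_distrib sum_subtractf)

lemma Ex_halted: "EE M p n (s, []) f = f (s, [])"
  using Ex_const[of M p n "(s, [])" "f (s,[])"] unfolding EE_def by simp

definition Lc :: "pda \<Rightarrow> nat set \<Rightarrow> nat \<times> nat list \<Rightarrow> bool list set" where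
  "Lc M F c = {w. snd (run M c w) = [] \<and> (\<forall>k<length w. snd (run M c (take k w)) \<noteq> []) \<and> fst (run M c w) \<in> F}"

lemma pda_lang_Lc: "pda_lang M F = Lc M F (start M, init_stack M)"
  unfolding pda_lang_def Lc_def by simp

lemma Lc_halted: "Lc M F (s, []) = (if s \<in> F then {[]} else {})"
proof -
  have "w \<in> Lc M F (s, []) \<longleftrightarrow> w = [] \<and> s \<in> F" for w
  proof (cases w)
    case Nil then show ?thesis by (simp add: Lc_def)
  next
    case (Cons x u)
    have "\<not> (\<forall>k<length w. snd (run M (s, []) (take k w)) \<noteq> [])"
      using Cons by (auto intro: exI[of _ 0])
    then show ?thesis using Cons by (simp add: Lc_def)
  qed
  then show ?thesis by auto
qed

lemma Lc_live:
  assumes "snd c \<noteq> []"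
  shows "Lc M F c = Cons True ` Lc M F (step M c True) \<union> Cons False ` Lc M F (step M c False)"
proof -
  have *: "x # u \<in> Lc M F c \<longleftrightarrow> u \<in> Lc M F (step M c x)" for x u
  proof -
    have "(\<forall>k<length (x # u). snd (run M c (take k (x # u))) \<noteq> []) \<longleftrightarrow>
          (\<forall>k<length u. snd (run M (step M c x) (take k u)) \<noteq> [])"
    proof
      assume H: "\<forall>k<length (x # u). snd (run M c (take k (x # u))) \<noteq> []"
      show "\<forall>k<length u. snd (run M (step M c x) (take k u)) \<noteq> []"
      proof (intro allI impI)
        fix k assume "k < length u"
        then have "snd (run M c (take (Suc k) (x # u))) \<noteq> []" using H by auto
        then show "snd (run M (step M c x) (take k u)) \<noteq> []" by (simp add: run_Cons)
      qed
    next
      assume H: "\<forall>k<length u. snd (run M (step M c x) (take k u)) \<noteq> []"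
      show "\<forall>k<length (x # u). snd (run M c (take k (x # u))) \<noteq> []"
      proof (intro allI impI)
        fix k assume k: "k < length (x # u)"
        show "snd (run M c (take k (x # u))) \<noteq> []"
        proof (cases k)
          case 0 then show ?thesis using assms by simp
        next
          case (Suc j) then show ?thesis using H k by (simp add: run_Cons)
        qed
      qed
    qed
    then show ?thesis by (simp add: Lc_def run_Cons)
  qed
  have "[] \<notin> Lc M F c" using assms by (simp add: Lc_def)
  show ?thesis
  proof (intro set_eqI iffI)
    fix w assume "w \<in> Lc M F c"
    with \<open>[] \<notin> Lc M F c\<close> obtain x u where "w = x # u" by (cases w) auto
    then show "w \<in> Cons True ` Lc M F (step M c True) \<union> Cons False ` Lc M F (step M c False)"
      using * \<open>w \<in> Lc M F c\<close> by (cases x) auto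
  next
    fix w assume "w \<in> Cons True ` Lc M F (step M c True) \<union> Cons False ` Lc M F (step M c False)"
    then show "w \<in> Lc M F c" using * by auto
  qed
qed

definition ind :: "nat set \<Rightarrow> nat \<times> nat list \<Rightarrow> real" where
  "ind F c = (if snd c = [] \<and> fst c \<in> F then 1 else 0)"

lemma finite_len_le: "finite {w \<in> (X::bool list set). length w \<le> n}"
  by (rule finite_subset[OF _ finite_lists_length_le[of "UNIV::bool set" n]]) auto

lemma Ex_ind: "EE M p n c (ind F) = (\<Sum>w\<in>{w \<in> Lc M F c. length w \<le> n}. Pword p w)"
proof (induction n arbitrary: c)
  case 0
  obtain s st where c: "c = (s, st)" by force
  have "{w \<in> Lc M F c. length w \<le> 0} = (if st = [] \<and> s \<in> F then {[]} else {})"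
    using c by (auto simp: Lc_def)
  then show ?case using c by (simp add: ind_def)
next
  case (Suc n)
  obtain s st where c: "c = (s, st)" by force
  show ?case
  proof (cases st)
    case Nil
    have "{w \<in> Lc M F c. length w \<le> Suc n} = (if s \<in> F then {[]} else {})"
      using c Nil by (auto simp: Lc_halted)
    moreover have "EE M p (Suc n) (s, []) (ind F) = (if s \<in> F then 1 else 0)"
      by (simp add: Ex_halted ind_def)
    ultimately show ?thesis using c Nil by simp
  next
    case (Cons b r)
    then have live: "snd c \<noteq> []" using c by simp
    let ?A = "\<lambda>x. {u \<in> Lc M F (step M c x). length u \<le> n}"
    have set: "{w \<in> Lc M F c. length w \<le> Suc n} = Cons True ` ?A True \<union> Cons False ` ?A False"
      unfolding Lc_live[OF live] by auto
    have "(\<Sum>w\<in>{w \<in> Lc M F c. length w \<le> Suc n}. Pword p w) =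
          (\<Sum>w\<in>Cons True ` ?A True. Pword p w) + (\<Sum>w\<in>Cons False ` ?A False. Pword p w)"
      unfolding set by (rule sum.union_disjoint) (auto intro: finite_len_le)
    also have "\<dots> = p * (\<Sum>w\<in>?A True. Pword p w) + (1 - p) * (\<Sum>w\<in>?A False. Pword p w)"
      by (simp add: sum.reindex Pword_Cons sum_distrib_left)
    finally show ?thesis by (simp add: Ex_Suc Suc.IH)
  qed
qed

lemma Plang_lim:
  assumes p: "0 \<le> p" "p \<le> 1"
    and lim: "(\<lambda>n. \<Sum>w\<in>{w \<in> L. length w \<le> n}. Pword p w) \<longlonglongrightarrow> l"
  shows "Plang p L = l"
proof -
  let ?s = "\<lambda>n. \<Sum>w\<in>{w \<in> L. length w \<le> n}. Pword p w"
  have inc: "incseq ?s"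
    by (rule incseq_SucI, rule sum_mono2) (auto intro: finite_len_le Pword_nonneg p)
  have sle: "?s n \<le> l" for n using incseq_le[OF inc lim] .
  have Fle: "sum (Pword p) F \<le> l" if "finite F" "F \<subseteq> L" for F
  proof -
    define n where "n = Max (length ` F)"
    have "F \<subseteq> {w \<in> L. length w \<le> n}" using that by (auto simp: n_def)
    then have "sum (Pword p) F \<le> ?s n"
      by (intro sum_mono2) (auto intro: finite_len_le Pword_nonneg p)
    then show ?thesis using sle[of n] by simp
  qed
  have bdd: "bdd_above (sum (Pword p) ` {F. F \<subseteq> L \<and> finite F})"
    using Fle by (auto simp: bdd_above_def)
  have eq: "infsum (Pword p) L = (SUP F\<in>{F. finite F \<and> F\<subseteq>L}. sum (Pword p) F)"
    by (rule nonneg_bdd_above_infsum) (auto intro: Pword_nonneg p bdd)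
  have bdd2: "bdd_above (sum (Pword p) ` {F. finite F \<and> F \<subseteq> L})"
    using bdd by (simp add: conj_commute)
  have "(SUP F\<in>{F. finite F \<and> F\<subseteq>L}. sum (Pword p) F) \<le> l"
    by (rule cSUP_least) (auto intro: Fle)
  moreover have "l \<le> (SUP F\<in>{F. finite F \<and> F\<subseteq>L}. sum (Pword p) F)"
  proof (rule LIMSEQ_le_const2[OF lim], intro exI allI impI)
    fix n
    show "?s n \<le> (SUP F\<in>{F. finite F \<and> F\<subseteq>L}. sum (Pword p) F)"
      by (rule cSUP_upper[OF _ bdd2]) (auto intro: finite_len_le)
  qed
  ultimately show ?thesis unfolding Plang_def eq by simp
qed

lemma Plang_Lc:
  assumes "0 \<le> p" "p \<le> 1" "(\<lambda>n. EE M p n c (ind F)) \<longlonglongrightarrow> l"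
  shows "Plang p (Lc M F c) = l"
  using assms by (intro Plang_lim) (auto simp: Ex_ind)

lemma Inv_run:
  assumes "\<And>c x. Inv c \<Longrightarrow> Inv (step M c x)" "Inv c"
  shows "Inv (run M c w)"
  using assms(2)
proof (induction w arbitrary: c)
  case Nil then show ?case by simp
next
  case (Cons x w) then show ?case using assms(1) by (simp add: run_Cons)
qed

definition alive :: "nat \<times> nat list \<Rightarrow> real" where
  "alive c = (if snd c \<noteq> [] then 1 else 0)"

lemma harmonic_limit:
  assumes p: "0 \<le> p" "p \<le> 1"
    and cl: "\<And>c x. Inv c \<Longrightarrow> Inv (step M c x)" and c0: "Inv c0"
    and harm: "\<And>c. Inv c \<Longrightarrow> snd c \<noteq> [] \<Longrightarrow> \<phi> c = p * \<phi> (step M c True) + (1 - p) * \<phi> (step M c False)"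
    and bound: "\<And>c. Inv c \<Longrightarrow> snd c = [] \<Longrightarrow> \<phi> c = ind F c"
    and B: "\<And>c. Inv c \<Longrightarrow> \<bar>\<phi> c\<bar> \<le> B"
    and al: "(\<lambda>n. EE M p n c0 alive) \<longlonglongrightarrow> 0"
  shows "(\<lambda>n. EE M p n c0 (ind F)) \<longlonglongrightarrow> \<phi> c0"
proof -
  have E: "Inv c \<Longrightarrow> EE M p n c \<phi> = \<phi> c" for n c
  proof (induction n arbitrary: c)
    case 0 then show ?case by simp
  next
    case (Suc n)
    show ?case
    proof (cases "snd c = []")
      case True
      then obtain s where "c = (s, [])" by (cases c) auto
      then show ?thesis by (simp add: Ex_halted)
    next
      case False
      then show ?thesis using Suc cl by (simp add: Ex_Suc harm)
    qed
  qed
  have Bn: "0 \<le> B" using B[OF c0] by linarith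
  have diff: "\<bar>\<phi> c0 - EE M p n c0 (ind F)\<bar> \<le> (B + 1) * EE M p n c0 alive" for n
  proof -
    have pt: "\<bar>\<phi> c - ind F c\<bar> \<le> (B + 1) * alive c" if "Inv c" for c
    proof (cases "snd c = []")
      case True then show ?thesis using bound[OF that] by (simp add: alive_def)
    next
      case False then show ?thesis using B[OF that] by (simp add: alive_def ind_def)
    qed
    have pt2: "\<bar>\<phi> (run M c0 w) - ind F (run M c0 w)\<bar> \<le> (B + 1) * alive (run M c0 w)" for w
      using pt Inv_run[OF cl c0] by blast
    have "\<phi> c0 - EE M p n c0 (ind F) = EE M p n c0 (\<lambda>c. \<phi> c - ind F c)"
      using E[OF c0, of n] by (simp add: Ex_diff)
    moreover have "EE M p n c0 (\<lambda>c. \<phi> c - ind F c) \<le> EE M p n c0 (\<lambda>c. (B + 1) * alive c)"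
      using pt2 by (intro Ex_mono p) (smt (verit))
    moreover have "EE M p n c0 (\<lambda>c. - ((B + 1) * alive c)) \<le> EE M p n c0 (\<lambda>c. \<phi> c - ind F c)"
      using pt2 by (intro Ex_mono p) (smt (verit))
    moreover have "EE M p n c0 (\<lambda>c. - ((B + 1) * alive c)) = - ((B + 1) * EE M p n c0 alive)"
      using Ex_cmult[of M p n c0 "-(B+1)" alive] by (simp only: mult_minus_left)
    ultimately show ?thesis using Ex_cmult[of M p n c0 "B+1" alive] unfolding abs_le_iff by (intro conjI; linarith)
  qed
  have "(\<lambda>n. (B + 1) * EE M p n c0 alive) \<longlonglongrightarrow> 0"
    using tendsto_mult_right_zero[OF al] by simp
  then have "(\<lambda>n. \<phi> c0 - EE M p n c0 (ind F)) \<longlonglongrightarrow> 0"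
    by (rule Lim_null_comparison[rotated]) (use diff in auto)
  then have "(\<lambda>n. \<phi> c0 - (\<phi> c0 - EE M p n c0 (ind F))) \<longlonglongrightarrow> \<phi> c0 - 0"
    by (intro tendsto_intros)
  then show ?thesis by simp
qed

lemma Ex_nonneg: "0 \<le> p \<Longrightarrow> p \<le> 1 \<Longrightarrow> (\<And>c. 0 \<le> f c) \<Longrightarrow> 0 \<le> EE M p n c f"
  unfolding EE_def by (intro sum_nonneg mult_nonneg_nonneg Pword_nonneg) auto

lemma halting_lemma:
  assumes p: "0 \<le> p" "p \<le> 1"
    and cl: "\<And>c x. Inv c \<Longrightarrow> Inv (step M c x)" and c0: "Inv c0"
    and Dcl: "\<And>c x. Inv c \<Longrightarrow> Dd c \<Longrightarrow> Dd (step M c x)"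
    and m: "0 < m" and d: "0 < \<delta>" "\<delta> \<le> 1"
    and reach: "\<And>c. Inv c \<Longrightarrow> \<not> Dd c \<Longrightarrow> \<delta> \<le> EE M p m c (\<lambda>c. if Dd c then 1 else 0)"
    and drain: "\<And>c w. Inv c \<Longrightarrow> Dd c \<Longrightarrow> length (snd c) \<le> length w \<Longrightarrow> snd (run M c w) = []"
    and grow: "\<And>c x. Inv c \<Longrightarrow> length (snd (step M c x)) \<le> Suc (length (snd c))"
  shows "(\<lambda>n. EE M p n c0 alive) \<longlonglongrightarrow> 0"
proof -
  define nd where "nd c = (if Dd c then 0 else (1::real))" for c
  have Dd_run: "Inv c \<Longrightarrow> Dd c \<Longrightarrow> Dd (run M c w)" for c w
  proof (induction w arbitrary: c)
    case Nil then show ?case by simp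
  next
    case (Cons x w) then show ?case using cl Dcl by (simp add: run_Cons)
  qed
  have grow_run: "Inv c \<Longrightarrow> length (snd (run M c w)) \<le> length (snd c) + length w" for c w
  proof (induction w arbitrary: c)
    case Nil then show ?case by simp
  next
    case (Cons x w)
    have "length (snd (run M (step M c x) w)) \<le> length (snd (step M c x)) + length w"
      using Cons cl by blast
    then show ?case using grow[OF Cons.prems, of x] by (simp add: run_Cons)
  qed
  have inv_run: "Inv (run M c0 w)" for w using Inv_run[OF cl c0] .
  have pt: "EE M p m c nd \<le> (1 - \<delta>) * nd c" if "Inv c" for c
  proof (cases "Dd c")
    case True
    have "EE M p m c nd = EE M p m c (\<lambda>_. 0)"
      using Dd_run[OF that True] by (intro Ex_cong) (simp add: nd_def)
    then show ?thesis using True by (simp add: Ex_const nd_def)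
  next
    case False
    have "EE M p m c nd = EE M p m c (\<lambda>c. 1 - (if Dd c then 1 else 0))"
      by (intro Ex_cong) (simp add: nd_def)
    also have "\<dots> = 1 - EE M p m c (\<lambda>c. if Dd c then 1 else 0)"
      by (simp add: Ex_diff Ex_const)
    finally show ?thesis using reach[OF that False] False by (simp add: nd_def)
  qed
  have q: "EE M p (j * m) c0 nd \<le> (1 - \<delta>) ^ j" for j
  proof (induction j)
    case 0 then show ?case by (simp add: nd_def)
  next
    case (Suc j)
    have "EE M p (Suc j * m) c0 nd = EE M p (j * m) c0 (\<lambda>c. EE M p m c nd)"
      using Ex_add[of M p "j * m" m c0 nd] by (simp add: add.commute)
    also have "\<dots> \<le> EE M p (j * m) c0 (\<lambda>c. (1 - \<delta>) * nd c)"
      using pt inv_run by (intro Ex_mono p) auto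
    also have "\<dots> = (1 - \<delta>) * EE M p (j * m) c0 nd" by (rule Ex_cmult)
    also have "\<dots> \<le> (1 - \<delta>) * (1 - \<delta>) ^ j"
      using Suc d by (intro mult_left_mono) auto
    finally show ?case by simp
  qed
  define h0 where "h0 = length (snd c0)"
  have ab: "EE M p n c0 alive \<le> (1 - \<delta>) ^ j" if n: "2 * j * m + h0 \<le> n" for n j
  proof -
    have "EE M p n c0 alive = EE M p (j * m + (n - j * m)) c0 alive" using n by simp
    also have "\<dots> = EE M p (j * m) c0 (\<lambda>c. EE M p (n - j * m) c alive)" by (rule Ex_add)
    also have "\<dots> \<le> EE M p (j * m) c0 nd"
    proof (intro Ex_mono p)
      fix w :: "bool list" assume lw: "length w = j * m"
      let ?c = "run M c0 w"
      show "EE M p (n - j * m) ?c alive \<le> nd ?c"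
      proof (cases "Dd ?c")
        case True
        have "length (snd ?c) \<le> h0 + j * m" using grow_run[OF c0, of w] lw by (simp add: h0_def)
        also have "\<dots> \<le> n - j * m" using n by simp
        finally have hl: "length (snd ?c) \<le> n - j * m" .
        have "EE M p (n - j * m) ?c alive = EE M p (n - j * m) ?c (\<lambda>_. 0)"
          using drain[OF inv_run True] hl by (intro Ex_cong) (simp add: alive_def)
        then show ?thesis by (simp add: Ex_const nd_def True)
      next
        case False
        have "EE M p (n - j * m) ?c alive \<le> EE M p (n - j * m) ?c (\<lambda>_. 1)"
          by (intro Ex_mono p) (simp add: alive_def)
        then show ?thesis by (simp add: Ex_const nd_def False)
      qed
    qed
    also have "\<dots> \<le> (1 - \<delta>) ^ j" by (rule q)
    finally show ?thesis .
  qed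
  have nn: "0 \<le> EE M p n c0 alive" for n by (rule Ex_nonneg[OF p]) (simp add: alive_def)
  have pz: "(\<lambda>j. (1 - \<delta>) ^ j) \<longlonglongrightarrow> 0"
    by (rule LIMSEQ_power_zero) (use d in auto)
  show ?thesis
  proof (rule LIMSEQ_I)
    fix r :: real assume r: "0 < r"
    obtain j where j: "norm ((1 - \<delta>) ^ j) < r" using LIMSEQ_D[OF pz r] by auto
    show "\<exists>no. \<forall>n\<ge>no. norm (EE M p n c0 alive - 0) < r"
    proof (intro exI allI impI)
      fix n assume "2 * j * m + h0 \<le> n"
      then have "EE M p n c0 alive \<le> (1 - \<delta>) ^ j" by (rule ab)
      then show "norm (EE M p n c0 alive - 0) < r" using j nn[of n] d by auto
    qed
  qed
qed

declare replicate_Suc[simp del]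

datatype outc = ONE | REC | ZERO | RETRY

definition enc :: "bool list \<Rightarrow> nat" where "enc u = Suc (to_nat u)"

lemma enc_nz[simp]: "enc u \<noteq> 0" by (simp add: enc_def)
lemma enc_inj[simp]: "enc u = enc v \<longleftrightarrow> u = v" by (simp add: enc_def)
lemma dec_enc[simp]: "from_nat (enc u - 1) = u" by (simp add: enc_def)
lemma dec_enc'[simp]: "from_nat (enc u - Suc 0) = u" by (simp add: enc_def)

definition tst :: "nat \<Rightarrow> (bool list \<Rightarrow> outc) \<Rightarrow> nat \<Rightarrow> bool \<Rightarrow> nat" where
  "tst N Dec s x = (if s = 0 then 0 else
     if length (from_nat (s - 1) @ [x]) < N then enc (from_nat (s - 1) @ [x])
     else if Dec (from_nat (s - 1) @ [x]) = ZERO then 0 else enc [])"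

definition tpu :: "nat \<Rightarrow> (bool list \<Rightarrow> outc) \<Rightarrow> nat \<Rightarrow> bool \<Rightarrow> nat list" where
  "tpu N Dec s x = (if s = 0 then [] else
     if length (from_nat (s - 1) @ [x]) < N then [0]
     else (case Dec (from_nat (s - 1) @ [x]) of ONE \<Rightarrow> [] | REC \<Rightarrow> [0, 0] | ZERO \<Rightarrow> [] | RETRY \<Rightarrow> [0]))"

definition mach :: "nat \<Rightarrow> (bool list \<Rightarrow> outc) \<Rightarrow> pda" where
  "mach N Dec = \<lparr> states = insert 0 (enc ` {u. length u < N}), start = enc [], stack_alph = {0},
     init_stack = [0], trans_state = (\<lambda>s x b. tst N Dec s x), trans_push = (\<lambda>s x b. tpu N Dec s x),
     out0 = {0}, out1 = {enc []} \<rparr>"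

definition res :: "outc \<Rightarrow> nat \<Rightarrow> nat \<times> nat list" where
  "res oc k = (case oc of ONE \<Rightarrow> (enc [], replicate (k - 1) 0) | REC \<Rightarrow> (enc [], replicate (Suc k) 0)
     | ZERO \<Rightarrow> (0, replicate (k - 1) 0) | RETRY \<Rightarrow> (enc [], replicate k 0))"

lemma step_drain: "step (mach N Dec) (0, replicate (Suc k) 0) x = (0, replicate k 0)"
  by (simp add: step_def mach_def tst_def tpu_def replicate_Suc)

lemma step_enc:
  assumes "length u < N"
  shows "step (mach N Dec) (enc u, replicate (Suc k) 0) x =
    (if length (u @ [x]) < N then (enc (u @ [x]), replicate (Suc k) 0) else res (Dec (u @ [x])) (Suc k))"
  by (cases "Dec (u @ [x])") (simp_all add: step_def mach_def tst_def tpu_def res_def replicate_Suc)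

lemma block:
  assumes "length u < N" "length u + length v = N"
  shows "run (mach N Dec) (enc u, replicate (Suc k) 0) v = res (Dec (u @ v)) (Suc k)"
  using assms
proof (induction v arbitrary: u)
  case Nil then show ?case by simp
next
  case (Cons x v)
  show ?case
  proof (cases "length (u @ [x]) < N")
    case True
    have "run (mach N Dec) (enc (u @ [x]), replicate (Suc k) 0) v = res (Dec ((u @ [x]) @ v)) (Suc k)"
      using Cons True by (intro Cons.IH) auto
    then show ?thesis using True Cons.prems by (simp add: run_Cons step_enc)
  next
    case False
    then have "v = []" using Cons.prems by (cases v) auto
    then show ?thesis using False Cons.prems by (simp add: run_Cons step_enc)
  qed
qed

definition Inv :: "nat \<Rightarrow> nat \<times> nat list \<Rightarrow> bool" where
  "Inv N c \<longleftrightarrow> (\<exists>u k. length u < N \<and> c = (enc u, replicate k 0) \<and> (k = 0 \<longrightarrow> u = [])) \<or>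
     (\<exists>k. c = (0, replicate k 0))"

lemma step_halted: "step M (s, []) x = (s, [])" by (simp add: step_def)

lemma Inv_res: "0 < N \<Longrightarrow> Inv N (res oc k)"
  unfolding Inv_def res_def by (cases oc) (auto simp del: replicate_Suc)

lemma Inv_step: assumes "0 < N" "Inv N c" shows "Inv N (step (mach N Dec) c x)"
proof -
  from assms(2) consider (a) u k where "length u < N" "c = (enc u, replicate k 0)" "k = 0 \<longrightarrow> u = []"
    | (b) k where "c = (0, replicate k 0)" unfolding Inv_def by blast
  then show ?thesis
  proof cases
    case a
    show ?thesis
    proof (cases k)
      case 0 then show ?thesis using a assms by (simp add: step_halted)
    next
      case (Suc j)
      then show ?thesis using a assms Inv_res[OF assms(1)]
        by (auto simp: step_enc Inv_def)
    qed
  next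
    case b
    show ?thesis
    proof (cases k)
      case 0 then show ?thesis using b assms by (simp add: step_halted)
    next
      case (Suc j) then show ?thesis using b by (auto simp: step_drain Inv_def)
    qed
  qed
qed

definition pio :: "nat \<Rightarrow> (bool list \<Rightarrow> outc) \<Rightarrow> real \<Rightarrow> outc \<Rightarrow> real" where
  "pio N Dec p oc = (\<Sum>v\<in>words N. if Dec v = oc then Pword p v else 0)"

lemma sum_by_outc:
  "(\<Sum>v\<in>words N. Pword p v * g (Dec v)) =
    g ONE * pio N Dec p ONE + g REC * pio N Dec p REC + g ZERO * pio N Dec p ZERO + g RETRY * pio N Dec p RETRY"
proof -
  have "(\<Sum>v\<in>words N. Pword p v * g (Dec v)) = (\<Sum>v\<in>words N.
      g ONE * (if Dec v = ONE then Pword p v else 0) + g REC * (if Dec v = REC then Pword p v else 0) +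
      g ZERO * (if Dec v = ZERO then Pword p v else 0) + g RETRY * (if Dec v = RETRY then Pword p v else 0))"
  proof (intro sum.cong refl)
    fix v show "Pword p v * g (Dec v) = g ONE * (if Dec v = ONE then Pword p v else 0) + g REC * (if Dec v = REC then Pword p v else 0) +
      g ZERO * (if Dec v = ZERO then Pword p v else 0) + g RETRY * (if Dec v = RETRY then Pword p v else 0)"
      by (cases "Dec v") simp_all
  qed
  then show ?thesis by (simp add: sum.distrib pio_def sum_distrib_left)
qed

lemma pi_sum: "pio N Dec p ONE + pio N Dec p REC + pio N Dec p ZERO + pio N Dec p RETRY = 1"
  using sum_by_outc[where g="\<lambda>_. 1" and N=N and p=p and Dec=Dec] by (simp add: sum_Pword_words)

lemma pi_nonneg: "0 \<le> p \<Longrightarrow> p \<le> 1 \<Longrightarrow> 0 \<le> pio N Dec p oc"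
  unfolding pio_def by (intro sum_nonneg) (auto intro: Pword_nonneg)

definition psi :: "real \<Rightarrow> nat \<times> nat list \<Rightarrow> real" where
  "psi y c = (if fst c = 0 then 0 else y ^ length (snd c))"

lemma round_value:
  assumes N: "0 < N" and k: "0 < k"
    and eq: "y * (pio N Dec p ONE + pio N Dec p REC + pio N Dec p ZERO) = pio N Dec p ONE + pio N Dec p REC * y ^ 2"
  shows "EE (mach N Dec) p N (enc [], replicate k 0) (psi y) = y ^ k"
proof -
  obtain j where j: "k = Suc j" using k by (cases k) auto
  let ?g = "\<lambda>oc. psi y (res oc k)"
  have "EE (mach N Dec) p N (enc [], replicate k 0) (psi y) = (\<Sum>v\<in>words N. Pword p v * ?g (Dec v))"
    unfolding EE_def j using block[where u="[]" and N=N and Dec=Dec and k=j, simplified, OF N] by (intro sum.cong) (auto simp: words_def)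
  also have "\<dots> = ?g ONE * pio N Dec p ONE + ?g REC * pio N Dec p REC + ?g ZERO * pio N Dec p ZERO + ?g RETRY * pio N Dec p RETRY"
    by (rule sum_by_outc)
  also have "\<dots> = y ^ j * pio N Dec p ONE + y ^ j * y ^ 2 * pio N Dec p REC + y ^ j * y * pio N Dec p RETRY"
    by (simp add: res_def psi_def j power2_eq_square)
  also have "\<dots> = y ^ j * (pio N Dec p ONE + y ^ 2 * pio N Dec p REC + y * pio N Dec p RETRY)"
    by (simp add: algebra_simps)
  also have "\<dots> = y ^ j * y"
  proof -
    have RET: "pio N Dec p RETRY = 1 - pio N Dec p ONE - pio N Dec p REC - pio N Dec p ZERO"
      using pi_sum[of N Dec p] by linarith
    have "pio N Dec p ONE + y ^ 2 * pio N Dec p REC + y * pio N Dec p RETRY = y"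
      unfolding RET using eq by (simp add: algebra_simps power2_eq_square)
    then show ?thesis by simp
  qed
  finally show ?thesis by (simp add: j)
qed

definition phi :: "nat \<Rightarrow> (bool list \<Rightarrow> outc) \<Rightarrow> real \<Rightarrow> real \<Rightarrow> nat \<times> nat list \<Rightarrow> real" where
  "phi N Dec p y c = (if fst c \<noteq> 0 \<and> snd c \<noteq> []
     then EE (mach N Dec) p (N - length (from_nat (fst c - 1) :: bool list)) c (psi y) else psi y c)"

definition Dd :: "nat \<times> nat list \<Rightarrow> bool" where
  "Dd c \<longleftrightarrow> fst c = 0 \<or> snd c = []"

definition dind :: "nat \<times> nat list \<Rightarrow> real" where
  "dind c = (if Dd c then 1 else 0)"

lemma Inv_cases:
  assumes "Inv N c"
  obtains (live) u k where "length u < N" "c = (enc u, replicate (Suc k) 0)"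
    | (start0) "c = (enc [], [])"
    | (drain) k where "c = (0, replicate (Suc k) 0)"
    | (drain0) "c = (0, [])"
  using assms unfolding Inv_def by (metis replicate_0 not0_implies_Suc)

lemma Dd_step: "Inv N c \<Longrightarrow> Dd c \<Longrightarrow> Dd (step (mach N Dec) c x)"
  by (erule Inv_cases) (auto simp: Dd_def step_halted step_drain)

lemma Dd_run: "0 < N \<Longrightarrow> Inv N c \<Longrightarrow> Dd c \<Longrightarrow> Dd (run (mach N Dec) c w)"
proof (induction w arbitrary: c)
  case Nil then show ?case by simp
next
  case (Cons x w) then show ?case using Inv_step Dd_step by (simp add: run_Cons)
qed

lemma drain_run: "length (snd c) \<le> length w \<Longrightarrow> Inv N c \<Longrightarrow> Dd c \<Longrightarrow> snd (run (mach N Dec) c w) = []"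
proof (induction w arbitrary: c)
  case Nil then show ?case by simp
next
  case (Cons x w)
  from Cons.prems(2) show ?case
  proof (cases rule: Inv_cases)
    case (live u k) then show ?thesis using Cons.prems by (simp add: Dd_def)
  next
    case start0 then show ?thesis by simp
  next
    case (drain k)
    have "snd (run (mach N Dec) (0, replicate k 0) w) = []"
      using Cons.prems drain by (intro Cons.IH) (auto simp: Inv_def Dd_def)
    then show ?thesis using drain by (simp add: run_Cons step_drain)
  next
    case drain0 then show ?thesis by simp
  qed
qed

lemma grow_step: "Inv N c \<Longrightarrow> length (snd (step (mach N Dec) c x)) \<le> Suc (length (snd c))"
  by (erule Inv_cases) (auto simp: step_halted step_drain step_enc res_def split: outc.splits)

lemma dind_le: "0 < N \<Longrightarrow> 0 \<le> p \<Longrightarrow> p \<le> 1 \<Longrightarrow> Inv N c \<Longrightarrow> dind c \<le> EE (mach N Dec) p n c dind"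
proof (cases "Dd c")
  case True
  assume "0 < N" "Inv N c"
  then have "EE (mach N Dec) p n c dind = EE (mach N Dec) p n c (\<lambda>_. 1)"
    using Dd_run True by (intro Ex_cong) (auto simp: dind_def)
  then show ?thesis by (simp add: Ex_const dind_def True)
next
  case False
  assume "0 \<le> p" "p \<le> 1"
  then show ?thesis using False by (simp add: dind_def Ex_nonneg)
qed

lemma round_dead:
  assumes N: "0 < N" and p: "0 \<le> p" "p \<le> 1" and n: "N \<le> n"
  shows "pio N Dec p ZERO \<le> EE (mach N Dec) p n (enc [], replicate (Suc j) 0) dind"
proof -
  let ?M = "mach N Dec" and ?c = "(enc [], replicate (Suc j) 0)"
  have I: "Inv N ?c" by (auto simp: Inv_def N)
  have "pio N Dec p ZERO = (\<Sum>v\<in>words N. Pword p v * (if Dec v = ZERO then 1 else 0))"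
    unfolding pio_def by (intro sum.cong) auto
  also have "\<dots> \<le> EE ?M p N ?c dind"
    unfolding EE_def
  proof (intro sum_mono mult_left_mono)
    fix v assume "v \<in> words N"
    then have "run ?M ?c v = res (Dec v) (Suc j)" using block[where u="[]" and N=N and v=v] N by (simp add: words_def)
    then show "(if Dec v = ZERO then 1 else 0) \<le> dind (run ?M ?c v)"
      by (cases "Dec v") (auto simp: dind_def Dd_def res_def)
    show "0 \<le> Pword p v" using p by (rule Pword_nonneg)
  qed
  also have "\<dots> \<le> EE ?M p N ?c (\<lambda>c. EE ?M p (n - N) c dind)"
    using dind_le[OF N p] Inv_run[of "Inv N" ?M, OF Inv_step[OF N] I] by (intro Ex_mono p) auto
  also have "\<dots> = EE ?M p n ?c dind" using Ex_add[of ?M p N "n - N" ?c dind] n by simp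
  finally show ?thesis .
qed

lemma Dd_dind: "0 < N \<Longrightarrow> Inv N c \<Longrightarrow> Dd c \<Longrightarrow> EE (mach N Dec) p n c dind = 1"
  using Dd_run by (subst Ex_cong[where g="\<lambda>_. 1"]) (auto simp: dind_def Ex_const)

lemma reach:
  assumes N: "0 < N" and p: "0 \<le> p" "p \<le> 1" and I: "Inv N c" and nD: "\<not> Dd c"
    and Z1: "pio N Dec p ZERO \<le> 1"
  shows "pio N Dec p ZERO \<le> EE (mach N Dec) p (2 * N) c dind"
proof -
  let ?M = "mach N Dec"
  from I nD obtain u k where u: "length u < N" and c: "c = (enc u, replicate (Suc k) 0)"
    by (cases rule: Inv_cases) (auto simp: Dd_def)
  define r where "r = N - length u"
  have "pio N Dec p ZERO = EE ?M p r c (\<lambda>_. pio N Dec p ZERO)" by (simp add: Ex_const)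
  also have "\<dots> \<le> EE ?M p r c (\<lambda>c'. EE ?M p (2 * N - r) c' dind)"
  proof (intro Ex_mono p)
    fix w :: "bool list" assume lw: "length w = r"
    have rw: "run ?M c w = res (Dec (u @ w)) (Suc k)" unfolding c using u lw by (intro block) (auto simp: r_def)
    show "pio N Dec p ZERO \<le> EE ?M p (2 * N - r) (run ?M c w) (dind)"
    proof (cases "Dd (res (Dec (u @ w)) (Suc k))")
      case True
      then show ?thesis unfolding rw using Dd_dind[OF N Inv_res[OF N] True] Z1 by simp
    next
      case False
      have "\<exists>j. res (Dec (u @ w)) (Suc k) = (enc [], replicate (Suc j) 0)"
        using False by (cases "Dec (u @ w)"; cases k) (auto simp: res_def Dd_def)
      then obtain j where "res (Dec (u @ w)) (Suc k) = (enc [], replicate (Suc j) 0)" by blast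
      then show ?thesis unfolding rw using round_dead[OF N p, of "2 * N - r"] by (simp add: r_def)
    qed
  qed
  also have "\<dots> = EE ?M p (2 * N) c dind" using Ex_add[of ?M p r "2 * N - r" c dind] by (simp add: r_def)
  finally show ?thesis .
qed

lemma alive_zero:
  assumes N: "0 < N" and p: "0 \<le> p" "p \<le> 1" and Z: "0 < pio N Dec p ZERO"
  shows "(\<lambda>n. EE (mach N Dec) p n (enc [], [0]) alive) \<longlonglongrightarrow> 0"
proof -
  have Z1: "pio N Dec p ZERO \<le> 1"
    using pi_sum[of N Dec p] pi_nonneg[OF p, of N Dec] by (smt (verit))
  have c0: "Inv N (enc [], [0])" unfolding Inv_def using N by (auto simp: replicate_Suc intro!: exI[of _ 1])
  show ?thesis
  proof (rule halting_lemma[where Inv="Inv N" and Dd=Dd and m="2 * N" and \<delta>="pio N Dec p ZERO"])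
    show "\<And>c x. Inv N c \<Longrightarrow> Inv N (step (mach N Dec) c x)" using Inv_step[OF N] by blast
    show "\<And>c. Inv N c \<Longrightarrow> \<not> Dd c \<Longrightarrow> pio N Dec p ZERO \<le> EE (mach N Dec) p (2 * N) c (\<lambda>c. if Dd c then 1 else 0)"
      using reach[OF N p _ _ Z1] unfolding dind_def by blast
    show "\<And>c w. Inv N c \<Longrightarrow> Dd c \<Longrightarrow> length (snd c) \<le> length w \<Longrightarrow> snd (run (mach N Dec) c w) = []"
      using drain_run by blast
  qed (use p c0 Dd_step grow_step N Z Z1 in auto)
qed

lemma phi_start:
  assumes N: "0 < N"
    and eq: "y * (pio N Dec p ONE + pio N Dec p REC + pio N Dec p ZERO) = pio N Dec p ONE + pio N Dec p REC * y ^ 2"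
  shows "phi N Dec p y (enc [], replicate j 0) = psi y (enc [], replicate j 0)"
proof (cases j)
  case 0 then show ?thesis by (simp add: phi_def)
next
  case (Suc i)
  then have "phi N Dec p y (enc [], replicate j 0) = EE (mach N Dec) p N (enc [], replicate j 0) (psi y)"
    by (simp add: phi_def replicate_Suc)
  also have "\<dots> = y ^ j" using round_value[OF N _ eq] Suc by simp
  finally show ?thesis by (simp add: psi_def)
qed

lemma phi_res:
  assumes N: "0 < N"
    and eq: "y * (pio N Dec p ONE + pio N Dec p REC + pio N Dec p ZERO) = pio N Dec p ONE + pio N Dec p REC * y ^ 2"
  shows "phi N Dec p y (res oc k) = psi y (res oc k)"
proof -
  have d: "phi N Dec p y (0, s) = psi y (0, s)" for s by (simp add: phi_def)
  show ?thesis by (cases oc) (simp_all only: res_def phi_start[OF N eq] d outc.case)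
qed

lemma phi_harm:
  assumes N: "0 < N"
    and eq: "y * (pio N Dec p ONE + pio N Dec p REC + pio N Dec p ZERO) = pio N Dec p ONE + pio N Dec p REC * y ^ 2"
    and I: "Inv N c" and live: "snd c \<noteq> []"
  shows "phi N Dec p y c = p * phi N Dec p y (step (mach N Dec) c True) + (1 - p) * phi N Dec p y (step (mach N Dec) c False)"
  using I
proof (cases rule: Inv_cases)
  case (live u k)
  let ?M = "mach N Dec"
  define r where "r = N - Suc (length u)"
  have Nr: "N - length u = Suc r" using live by (simp add: r_def)
  have st: "EE ?M p r (step ?M c x) (psi y) = phi N Dec p y (step ?M c x)" for x
  proof (cases "length (u @ [x]) < N")
    case True
    then show ?thesis using live by (simp add: step_enc phi_def r_def)
  next
    case False
    then have "r = 0" using live by (simp add: r_def)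
    then show ?thesis using live False phi_res[OF N eq] by (simp add: step_enc)
  qed
  have "phi N Dec p y c = EE ?M p (Suc r) c (psi y)"
    using live Nr by (simp add: phi_def)
  also have "\<dots> = p * EE ?M p r (step ?M c True) (psi y) + (1 - p) * EE ?M p r (step ?M c False) (psi y)"
    by (rule Ex_Suc)
  finally show ?thesis using st by simp
next
  case start0 then show ?thesis using live by simp
next
  case (drain k) then show ?thesis by (simp add: phi_def psi_def step_drain)
next
  case drain0 then show ?thesis using live by simp
qed

lemma psi_bound: "0 \<le> y \<Longrightarrow> y \<le> 1 \<Longrightarrow> 0 \<le> psi y c \<and> psi y c \<le> 1"
  by (simp add: psi_def power_le_one)

lemma phi_bound:
  assumes p: "0 \<le> p" "p \<le> 1" and y: "0 \<le> y" "y \<le> 1"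
  shows "\<bar>phi N Dec p y c\<bar> \<le> 1"
proof -
  have "0 \<le> EE M p n c (psi y) \<and> EE M p n c (psi y) \<le> 1" for M n c
  proof
    show "0 \<le> EE M p n c (psi y)" using psi_bound[OF y] by (intro Ex_nonneg p) auto
    have "EE M p n c (psi y) \<le> EE M p n c (\<lambda>_. 1)" using psi_bound[OF y] by (intro Ex_mono p) auto
    then show "EE M p n c (psi y) \<le> 1" by (simp add: Ex_const)
  qed
  then show ?thesis using psi_bound[OF y] by (simp add: phi_def)
qed

lemma mach_correct:
  assumes N: "0 < N" and p: "0 \<le> p" "p \<le> 1" and Z: "0 < pio N Dec p ZERO"
    and y: "0 \<le> y" "y \<le> 1"
    and eq: "y * (pio N Dec p ONE + pio N Dec p REC + pio N Dec p ZERO) = pio N Dec p ONE + pio N Dec p REC * y ^ 2"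
  shows "Plang p (pda_lang (mach N Dec) {enc []}) = y"
    and "Plang p (pda_lang (mach N Dec) {0}) = 1 - y"
    and "Plang p (pda_lang (mach N Dec) {0, enc []}) = 1"
proof -
  let ?M = "mach N Dec" and ?c0 = "(enc [], [0::nat])"
  have c0: "Inv N ?c0" unfolding Inv_def using N by (auto simp: replicate_Suc intro!: exI[of _ 1])
  have al: "(\<lambda>n. EE ?M p n ?c0 alive) \<longlonglongrightarrow> 0" by (rule alive_zero[OF N p Z])
  have cl: "\<And>c x. Inv N c \<Longrightarrow> Inv N (step ?M c x)" using Inv_step[OF N] by blast
  have halt: "Inv N c \<Longrightarrow> snd c = [] \<Longrightarrow> c = (enc [], []) \<or> c = (0, [])" for c
    by (erule Inv_cases) auto
  have L1: "(\<lambda>n. EE ?M p n ?c0 (ind {enc []})) \<longlonglongrightarrow> phi N Dec p y ?c0"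
  proof (rule harmonic_limit[OF p cl c0 _ _ _ al])
    show "\<And>c. Inv N c \<Longrightarrow> snd c \<noteq> [] \<Longrightarrow> phi N Dec p y c = p * phi N Dec p y (step ?M c True) + (1 - p) * phi N Dec p y (step ?M c False)"
      using phi_harm[OF N eq] by blast
    show "\<And>c. Inv N c \<Longrightarrow> snd c = [] \<Longrightarrow> phi N Dec p y c = ind {enc []} c"
      using halt by (fastforce simp: phi_def psi_def ind_def)
    show "\<And>c. Inv N c \<Longrightarrow> \<bar>phi N Dec p y c\<bar> \<le> 1" using phi_bound[OF p y] by blast
  qed
  have "phi N Dec p y ?c0 = y" using phi_start[OF N eq, of 1] by (simp add: psi_def replicate_Suc)
  with L1 have L1': "(\<lambda>n. EE ?M p n ?c0 (ind {enc []})) \<longlonglongrightarrow> y" by simp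
  have L2: "(\<lambda>n. EE ?M p n ?c0 (ind {0, enc []})) \<longlonglongrightarrow> (\<lambda>_. 1) ?c0"
  proof (rule harmonic_limit[OF p cl c0 _ _ _ al])
    show "\<And>c. Inv N c \<Longrightarrow> snd c = [] \<Longrightarrow> (1::real) = ind {0, enc []} c"
      using halt by (fastforce simp: ind_def)
  qed auto
  have L3: "(\<lambda>n. EE ?M p n ?c0 (ind {0})) \<longlonglongrightarrow> 1 - y"
  proof -
    have "EE ?M p n ?c0 (ind {0}) = EE ?M p n ?c0 (ind {0, enc []}) - EE ?M p n ?c0 (ind {enc []})" for n
      by (subst Ex_diff[symmetric]) (auto intro!: Ex_cong simp: ind_def)
    then show ?thesis using tendsto_diff[OF L2 L1'] by simp
  qed
  have sc: "(start ?M, init_stack ?M) = ?c0" by (simp add: mach_def)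
  show "Plang p (pda_lang ?M {enc []}) = y" unfolding pda_lang_Lc sc by (rule Plang_Lc[OF p L1'])
  show "Plang p (pda_lang ?M {0}) = 1 - y" unfolding pda_lang_Lc sc by (rule Plang_Lc[OF p L3])
  show "Plang p (pda_lang ?M {0, enc []}) = 1" unfolding pda_lang_Lc sc using Plang_Lc[OF p L2] by simp
qed

definition swp :: "pda \<Rightarrow> pda" where
  "swp M = M\<lparr>out0 := out1 M, out1 := out0 M\<rparr>"

lemma run_swp: "run (swp M) c w = run M c w"
proof (induction w arbitrary: c)
  case Nil then show ?case by simp
next
  case (Cons x w)
  obtain s st where c: "c = (s, st)" by force
  show ?case using Cons by (cases st) (simp_all add: c swp_def)
qed

lemma pda_lang_swp: "pda_lang (swp M) F = pda_lang M F"
  unfolding pda_lang_def run_swp by (simp add: swp_def)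

lemma prefix_free_pda_lang: "prefix_free (pda_lang M F)"
  unfolding prefix_free_def
proof (intro ballI impI)
  fix u v assume u: "u \<in> pda_lang M F" and v: "v \<in> pda_lang M F" and "\<exists>z. v = u @ z"
  then obtain z where z: "v = u @ z" by blast
  show "u = v"
  proof (cases "z = []")
    case True then show ?thesis using z by simp
  next
    case False
    then have "length u < length v" using z by simp
    then have "snd (run M (start M, init_stack M) (take (length u) v)) \<noteq> []"
      using v by (simp add: pda_lang_def)
    moreover have "take (length u) v = u" using z by simp
    ultimately show ?thesis using u by (simp add: pda_lang_def)
  qed
qed

lemma pda_lang_union: "pda_lang M A \<union> pda_lang M B = pda_lang M (A \<union> B)"
  unfolding pda_lang_def by auto

lemma pda_lang_disj: "A \<inter> B = {} \<Longrightarrow> pda_lang M A \<inter> pda_lang M B = {}"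
  unfolding pda_lang_def by auto

lemma wf_mach: assumes N: "0 < N" shows "wf_pda (mach N Dec)"
proof -
  have fin: "finite (enc ` {u::bool list. length u < N})"
    by (rule finite_imageI, rule finite_subset[OF _ finite_lists_length_le[of "UNIV::bool set" N]]) auto
  have tr: "tst N Dec s x \<in> insert 0 (enc ` {u. length u < N})" for s x
    by (auto simp: tst_def N)
  have pu: "set (tpu N Dec s x) \<subseteq> {0}" for s x
    by (auto simp: tpu_def split: outc.splits)
  show ?thesis unfolding wf_pda_def using fin tr pu N by (auto simp: mach_def)
qed

lemma wf_swp: "wf_pda M \<Longrightarrow> wf_pda (swp M)"
  unfolding wf_pda_def swp_def by auto

lemma mach_sim:
  assumes N: "0 < N"
    and H: "\<And>p. p \<in> D \<Longrightarrow> 0 \<le> p \<and> p \<le> 1 \<and> 0 < pio N Dec p ZERO \<and> 0 \<le> y p \<and> y p \<le> 1 \<and>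
      y p * (pio N Dec p ONE + pio N Dec p REC + pio N Dec p ZERO) = pio N Dec p ONE + pio N Dec p REC * (y p) ^ 2"
  shows "pda_simulates (mach N Dec) y D" "pda_simulates (swp (mach N Dec)) (\<lambda>p. 1 - y p) D"
proof -
  let ?M = "mach N Dec"
  have o: "out0 ?M = {0}" "out1 ?M = {enc []}" by (simp_all add: mach_def)
  have d: "{0} \<inter> {enc []} = {}" by simp
  have u: "{0} \<union> {enc []} = {0, enc []}" "{enc []} \<union> {0} = {0, enc []}" by auto
  show "pda_simulates ?M y D"
    unfolding pda_simulates_def is_simulation_def o pda_lang_union u
  proof (intro conjI ballI)
    fix p assume "p \<in> D"
    then have Hp: "0 \<le> p" "p \<le> 1" "0 < pio N Dec p ZERO" "0 \<le> y p" "y p \<le> 1"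
      "y p * (pio N Dec p ONE + pio N Dec p REC + pio N Dec p ZERO) = pio N Dec p ONE + pio N Dec p REC * (y p) ^ 2"
      using H by auto
    show "Plang p (pda_lang ?M {0, enc []}) = 1" by (rule mach_correct(3)[OF N Hp])
    show "Plang p (pda_lang ?M {enc []}) = y p" by (rule mach_correct(1)[OF N Hp])
  qed (rule pda_lang_disj[OF d], rule prefix_free_pda_lang)
  have d2: "{enc []} \<inter> {0} = {}" by simp
  have o2: "out0 (swp ?M) = {enc []}" "out1 (swp ?M) = {0}" by (simp_all add: mach_def swp_def)
  show "pda_simulates (swp ?M) (\<lambda>p. 1 - y p) D"
    unfolding pda_simulates_def is_simulation_def o2 pda_lang_union u pda_lang_swp
  proof (intro conjI ballI)
    fix p assume "p \<in> D"
    then have Hp: "0 \<le> p" "p \<le> 1" "0 < pio N Dec p ZERO" "0 \<le> y p" "y p \<le> 1"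
      "y p * (pio N Dec p ONE + pio N Dec p REC + pio N Dec p ZERO) = pio N Dec p ONE + pio N Dec p REC * (y p) ^ 2"
      using H by auto
    show "Plang p (pda_lang ?M {0, enc []}) = 1" by (rule mach_correct(3)[OF N Hp])
    show "Plang p (pda_lang ?M {0}) = 1 - y p" by (rule mach_correct(2)[OF N Hp])
  qed (rule pda_lang_disj[OF d2], rule prefix_free_pda_lang)
qed

definition Dec3 :: "bool list \<Rightarrow> outc" where
  "Dec3 v = (if v = [True, False, False] then ONE
     else if v = [False, True, False] \<or> v = [False, True, True] then REC
     else if v = [True, True, False] then ZERO else RETRY)"

lemma words0: "words 0 = {[]}" by (auto simp: words_def)

lemma sum_words3: "(\<Sum>v\<in>words 3. h v) =
  h [True, True, True] + h [True, True, False] + h [True, False, True] + h [True, False, False] +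
  h [False, True, True] + h [False, True, False] + h [False, False, True] + h [False, False, False]"
  by (simp add: numeral_eq_Suc sum_words_Suc words0 add.assoc)

lemma Pword3: "Pword p [a, b, c] = (if a then p else 1 - p) * (if b then p else 1 - p) * (if c then p else 1 - p)"
  by (simp add: Pword_Cons)

lemma part_b: "\<exists>M. wf_pda M \<and> pda_simulates M sqrt {0<..<1}"
proof -
  have "pda_simulates (swp (mach 3 Dec3)) (\<lambda>p. 1 - (1 - sqrt p)) {0<..<1}"
  proof (rule mach_sim(2))
    fix p :: real assume p: "p \<in> {0<..<1}"
    have O: "pio 3 Dec3 p ONE = p * (1 - p) * (1 - p)"
      unfolding pio_def sum_words3 by (simp add: Dec3_def Pword3)
    have R: "pio 3 Dec3 p REC = p * (1 - p)"
      unfolding pio_def sum_words3 by (simp add: Dec3_def Pword3 algebra_simps)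
    have Z: "pio 3 Dec3 p ZERO = p * p * (1 - p)"
      unfolding pio_def sum_words3 by (simp add: Dec3_def Pword3)
    define s where "s = sqrt p"
    have ps: "p = s * s" using p by (simp add: s_def)
    have s01: "0 \<le> s" "s \<le> 1" using p by (auto simp: s_def)
    have eq: "(1 - s) * (p * (1 - p) * (1 - p) + p * (1 - p) + p * p * (1 - p)) = p * (1 - p) * (1 - p) + p * (1 - p) * (1 - s) ^ 2"
      unfolding ps by algebra
    show "0 \<le> p \<and> p \<le> 1 \<and> 0 < pio 3 Dec3 p ZERO \<and> 0 \<le> 1 - sqrt p \<and> 1 - sqrt p \<le> 1 \<and>
      (1 - sqrt p) * (pio 3 Dec3 p ONE + pio 3 Dec3 p REC + pio 3 Dec3 p ZERO) = pio 3 Dec3 p ONE + pio 3 Dec3 p REC * (1 - sqrt p) ^ 2"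
      using p eq s01 unfolding O R Z s_def by auto
  qed simp
  then show ?thesis using wf_swp[OF wf_mach[of 3 Dec3]] by auto
qed

definition brep :: "nat \<Rightarrow> (nat \<Rightarrow> real) \<Rightarrow> real \<Rightarrow> real" where
  "brep n a x = (\<Sum>k\<le>n. a k * x ^ k * (1 - x) ^ (n - k))"

definition bc :: "'a::comm_semiring_1 poly \<Rightarrow> nat \<Rightarrow> nat \<Rightarrow> 'a" where
  "bc F n k = (\<Sum>j\<le>k. coeff F j * of_nat ((n - j) choose (k - j)))"

lemma bc_pCons_0: "bc (pCons c G) n 0 = c"
  by (simp add: bc_def)

lemma bc_pCons_Suc: "bc (pCons c G) (Suc n) (Suc k) = c * of_nat (Suc n choose Suc k) + bc G n k"
  unfolding bc_def by (subst sum.atMost_Suc_shift) (simp del: binomial_Suc_Suc sum.atMost_Suc)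

lemma brep_const: "brep n (\<lambda>k. c * of_nat (n choose k)) x = c"
proof -
  have "(x + (1 - x)) ^ n = (\<Sum>k\<le>n. of_nat (n choose k) * x ^ k * (1 - x) ^ (n - k))"
    by (rule binomial_ring)
  then have "(\<Sum>k\<le>n. of_nat (n choose k) * x ^ k * (1 - x) ^ (n - k)) = 1" by simp
  then show ?thesis unfolding brep_def
    by (simp add: mult.assoc sum_distrib_left[symmetric])
qed

lemma brep_shift1: "x * brep n a x = brep (Suc n) (\<lambda>k. if k = 0 then 0 else a (k - 1)) x"
  unfolding brep_def by (subst sum.atMost_Suc_shift) (simp add: sum_distrib_left mult_ac del: sum.atMost_Suc)

lemma brep_add: "brep n a x + brep n b x = brep n (\<lambda>k. a k + b k) x"
  unfolding brep_def by (simp add: sum.distrib distrib_right)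

lemma brep_cong: "(\<And>k. k \<le> n \<Longrightarrow> a k = b k) \<Longrightarrow> brep n a x = brep n b x"
  unfolding brep_def by simp

lemma bc_rep: "degree F \<le> n \<Longrightarrow> poly F x = brep n (bc F n) x"
proof (induction F arbitrary: n rule: pCons_induct)
  case 0
  then show ?case by (simp add: brep_def bc_def)
next
  case (pCons c G)
  show ?case
  proof (cases n)
    case 0
    then have "G = 0" using pCons.prems by (auto simp: degree_pCons_eq_if split: if_splits)
    then show ?thesis using 0 by (simp add: brep_def bc_def)
  next
    case (Suc m)
    have dG: "degree G \<le> m" using pCons.prems Suc by (auto simp: degree_pCons_eq_if split: if_splits)
    have "poly (pCons c G) x = c + x * poly G x" by simp
    also have "\<dots> = brep (Suc m) (\<lambda>k. c * of_nat (Suc m choose k)) x + brep (Suc m) (\<lambda>k. if k = 0 then 0 else bc G m (k - 1)) x"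
      using pCons.IH[OF dG] by (simp add: brep_const brep_shift1)
    also have "\<dots> = brep (Suc m) (bc (pCons c G) (Suc m)) x"
      unfolding brep_add
    proof (rule brep_cong)
      fix k show "c * of_nat (Suc m choose k) + (if k = 0 then 0 else bc G m (k - 1)) = bc (pCons c G) (Suc m) k"
        by (cases k) (simp_all add: bc_pCons_0 bc_pCons_Suc del: binomial_Suc_Suc)
    qed
    finally show ?thesis using Suc by simp
  qed
qed

lemma choose_Suc_mult: "(k choose Suc j) * Suc j = (k choose j) * (k - j)"
proof (cases "Suc j \<le> k")
  case True
  have "(k choose Suc j) * (Suc j choose j) = (k choose j) * ((k - j) choose (Suc j - j))"
    using True by (intro choose_mult) auto
  then show ?thesis by simp
next
  case False
  then have "k \<le> j" by simp
  then show ?thesis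
    by (cases "k = j") (simp_all add: binomial_eq_0)
qed

definition rr :: "nat \<Rightarrow> nat \<Rightarrow> nat \<Rightarrow> real" where
  "rr n k j = real (k choose j) / real (n choose j)"

lemma rr_Suc:
  assumes "j < n"
  shows "rr n k (Suc j) = rr n k j * (real (k - j) / real (n - j))"
proof -
  have n0: "real (n choose j) > 0" using assms by simp
  have n1: "real (n choose Suc j) > 0" using assms by simp
  have a: "real (k choose Suc j) * real (Suc j) = real (k choose j) * real (k - j)"
    using choose_Suc_mult[of k j] by (metis of_nat_mult)
  have b: "real (n choose Suc j) * real (Suc j) = real (n choose j) * real (n - j)"
    using choose_Suc_mult[of n j] by (metis of_nat_mult)
  have nj: "real (n - j) > 0" using assms by simp
  have "rr n k (Suc j) = (real (k choose Suc j) * real (Suc j)) / (real (n choose Suc j) * real (Suc j))"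
    unfolding rr_def by simp
  also have "\<dots> = (real (k choose j) * real (k - j)) / (real (n choose j) * real (n - j))"
    unfolding a b ..
  finally show ?thesis unfolding rr_def by simp
qed

lemma rr_bound:
  assumes n: "0 < n" and k: "k \<le> n"
  shows "j \<le> n \<Longrightarrow> 0 \<le> rr n k j \<and> rr n k j \<le> (real k / real n) ^ j \<and>
           (real k / real n) ^ j - rr n k j \<le> real j * real j / real n"
proof (induction j)
  case 0 then show ?case by (simp add: rr_def)
next
  case (Suc j)
  define x where "x = real k / real n"
  define t where "t = real (k - j) / real (n - j)"
  have jn: "j < n" using Suc.prems by simp
  have IH: "0 \<le> rr n k j" "rr n k j \<le> x ^ j" "x ^ j - rr n k j \<le> real j * real j / real n"
    using Suc.IH jn unfolding x_def by auto
  have x01: "0 \<le> x" "x \<le> 1" using n k by (auto simp: x_def)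
  have nj: "real n - real j > 0" using jn by simp
  have t0: "0 \<le> t" by (simp add: t_def)
  have tx: "t \<le> x \<and> x - t \<le> real j / real n"
  proof (cases "j \<le> k")
    case True
    have t': "t = (real k - real j) / (real n - real j)" using True jn by (simp add: t_def of_nat_diff)
    have "real n * (real k - real j) \<le> real k * (real n - real j)"
      using k by (simp add: algebra_simps mult_left_mono)
    then have 1: "t \<le> x" unfolding t' x_def using n nj by (simp add: field_simps)
    have "x - t = real j * (real n - real k) / (real n * (real n - real j))"
      unfolding t' x_def using n nj by (simp add: field_simps)
    also have "\<dots> \<le> real j * (real n - real j) / (real n * (real n - real j))"
      using True n nj by (intro divide_right_mono mult_left_mono) auto
    also have "\<dots> = real j / real n" using nj by simp
    finally show ?thesis using 1 by simp
  next
    case False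
    then have "t = 0" by (simp add: t_def)
    moreover have "x \<le> real j / real n" using False n by (simp add: x_def divide_right_mono)
    ultimately show ?thesis using x01 by simp
  qed
  have r: "rr n k (Suc j) = rr n k j * t" unfolding t_def by (rule rr_Suc[OF jn])
  have r0: "0 \<le> rr n k j * t" using IH t0 by simp
  have r1: "rr n k j * t \<le> x ^ j * x" using IH tx t0 x01 by (intro mult_mono) auto
  have "x ^ Suc j - rr n k j * t = x * (x ^ j - rr n k j) + rr n k j * (x - t)"
    by (simp add: algebra_simps)
  also have "\<dots> \<le> (x ^ j - rr n k j) + (x - t)"
  proof (intro add_mono)
    show "x * (x ^ j - rr n k j) \<le> x ^ j - rr n k j" using x01 IH by (simp add: mult_left_le_one_le)
    have "rr n k j \<le> 1" using IH x01 power_le_one[of x j] by linarith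
    then show "rr n k j * (x - t) \<le> x - t" using tx IH by (simp add: mult_left_le_one_le)
  qed
  also have "\<dots> \<le> real j * real j / real n + real j / real n" using IH tx by linarith
  also have "\<dots> \<le> real (Suc j) * real (Suc j) / real n"
    using n by (simp add: divide_right_mono add_divide_distrib[symmetric] algebra_simps)
  finally show ?case using r r0 r1 by (simp add: x_def mult.commute)
qed

lemma bc_ratio:
  fixes H :: "real poly"
  assumes kn: "k \<le> n" and dn: "degree H \<le> n"
  shows "bc H n k = real (n choose k) * (\<Sum>j\<le>degree H. coeff H j * rr n k j)"
proof -
  have "bc H n k = (\<Sum>j\<le>k. coeff H j * (real (n choose k) * rr n k j))"
    unfolding bc_def
  proof (intro sum.cong refl)
    fix j assume "j \<in> {..k}"
    then have jk: "j \<le> k" by simp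
    have "(n choose k) * (k choose j) = (n choose j) * ((n - j) choose (k - j))"
      using jk kn by (rule choose_mult)
    then have "real (n choose k) * real (k choose j) = real (n choose j) * real ((n - j) choose (k - j))"
      by (metis of_nat_mult)
    moreover have "real (n choose j) > 0" using jk kn by simp
    ultimately show "coeff H j * of_nat ((n - j) choose (k - j)) = coeff H j * (real (n choose k) * rr n k j)"
      unfolding rr_def by (simp add: field_simps)
  qed
  also have "\<dots> = real (n choose k) * (\<Sum>j\<le>k. coeff H j * rr n k j)"
    by (simp add: sum_distrib_left mult_ac)
  also have "(\<Sum>j\<le>k. coeff H j * rr n k j) = (\<Sum>j\<le>max k (degree H). coeff H j * rr n k j)"
    by (rule sum.mono_neutral_left) (auto simp: rr_def binomial_eq_0)
  also have "\<dots> = (\<Sum>j\<le>degree H. coeff H j * rr n k j)"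
    by (rule sum.mono_neutral_right) (auto simp: coeff_eq_0)
  finally show ?thesis .
qed

lemma bc_nonneg_eventually:
  fixes H :: "real poly"
  assumes pos: "\<And>x. 0 \<le> x \<Longrightarrow> x \<le> 1 \<Longrightarrow> 0 < poly H x"
  shows "\<exists>n0. \<forall>n\<ge>n0. \<forall>k\<le>n. 0 \<le> bc H n k"
proof -
  obtain x0 where x0: "x0 \<in> {0..1}" "\<And>x. x \<in> {0..1} \<Longrightarrow> poly H x0 \<le> poly H x"
  proof -
    have "continuous_on {0..1::real} (poly H)" by (intro continuous_intros)
    then have "\<exists>x\<in>{0..1::real}. \<forall>y\<in>{0..1}. poly H x \<le> poly H y"
      by (intro continuous_attains_inf) auto
    then show ?thesis using that by blast
  qed
  define m where "m = poly H x0"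
  have m: "0 < m" using pos x0 by (simp add: m_def)
  define d where "d = degree H"
  define C where "C = (\<Sum>j\<le>d. \<bar>coeff H j\<bar> * (real j * real j))"
  have C0: "0 \<le> C" unfolding C_def by (intro sum_nonneg) auto
  define n0 where "n0 = Suc d + nat \<lceil>C / m\<rceil>"
  show ?thesis
  proof (intro exI allI impI)
    fix n k assume n: "n0 \<le> n" and k: "k \<le> n"
    have dn: "d < n" and n0': "0 < n" using n by (auto simp: n0_def)
    have Cn: "C / m < real n"
    proof -
      have "C / m \<le> real (nat \<lceil>C / m\<rceil>)" by linarith
      then show ?thesis using n unfolding n0_def by linarith
    qed
    then have Cn': "C / real n < m" using n0' m by (simp add: field_simps)
    define x where "x = real k / real n"
    have x01: "0 \<le> x" "x \<le> 1" using k n0' by (auto simp: x_def)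
    have Hx: "poly H x = (\<Sum>j\<le>d. coeff H j * x ^ j)" unfolding d_def by (rule poly_altdef)
    have "\<bar>(\<Sum>j\<le>d. coeff H j * rr n k j) - poly H x\<bar> = \<bar>\<Sum>j\<le>d. coeff H j * (rr n k j - x ^ j)\<bar>"
      unfolding Hx by (simp add: sum_subtractf algebra_simps)
    also have "\<dots> \<le> (\<Sum>j\<le>d. \<bar>coeff H j * (rr n k j - x ^ j)\<bar>)" by (rule sum_abs)
    also have "\<dots> \<le> (\<Sum>j\<le>d. \<bar>coeff H j\<bar> * (real j * real j) / real n)"
    proof (intro sum_mono)
      fix j assume "j \<in> {..d}"
      then have "j \<le> n" using dn by simp
      then have "\<bar>rr n k j - x ^ j\<bar> \<le> real j * real j / real n"
        using rr_bound[OF n0' k] unfolding x_def by (simp add: abs_le_iff)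
      then show "\<bar>coeff H j * (rr n k j - x ^ j)\<bar> \<le> \<bar>coeff H j\<bar> * (real j * real j) / real n"
        by (simp add: abs_mult mult_left_mono times_divide_eq_right[symmetric] del: times_divide_eq_right)
    qed
    also have "\<dots> = C / real n" unfolding C_def by (simp add: sum_divide_distrib)
    finally have est: "\<bar>(\<Sum>j\<le>d. coeff H j * rr n k j) - poly H x\<bar> \<le> C / real n" .
    have "m \<le> poly H x" using x0 x01 by (simp add: m_def)
    then have "0 \<le> (\<Sum>j\<le>d. coeff H j * rr n k j)" using est Cn' by (simp add: abs_le_iff)
    then show "0 \<le> bc H n k" using bc_ratio[OF k] dn unfolding d_def by simp
  qed
qed

abbreviation mpr :: "rat poly \<Rightarrow> real poly" where "mpr F \<equiv> map_poly of_rat F"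

lemma coeff_mpr: "coeff (mpr F) j = of_rat (coeff F j)"
  by (simp add: coeff_map_poly)

lemma mpr_mult: "mpr (p * q) = mpr p * mpr q"
  by (rule poly_eqI) (simp add: coeff_mpr coeff_mult of_rat_sum of_rat_mult)

lemma mpr_power: "mpr (p ^ n) = mpr p ^ n"
  by (induction n) (simp_all add: mpr_mult)

lemma degree_mpr: "degree (mpr F) = degree F"
  by (rule degree_map_poly) simp

lemma mpr_lin: "mpr [:a, b:] = [:of_rat a, of_rat b:]"
  by (rule poly_eqI) (simp add: coeff_mpr coeff_pCons split: nat.split)

lemma mpr_lin1: "mpr (pCons a 1) = pCons (of_rat a) 1"
  by (rule poly_eqI) (simp add: coeff_mpr coeff_pCons split: nat.split)

lemma mpr_smult: "mpr (smult c p) = smult (of_rat c) (mpr p)"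
  by (rule map_poly_smult) (simp_all add: of_rat_mult)

lemma mpr_pCons: "mpr (pCons a p) = pCons (of_rat a) (mpr p)"
  by (rule poly_eqI) (simp add: coeff_mpr coeff_pCons split: nat.split)

lemma poly_mpr_of_rat: "poly (mpr F) (of_rat c) = of_rat (poly F c)"
  by (induction F) (simp_all add: mpr_pCons of_rat_add of_rat_mult)

lemma poly_mpr_0: "poly (mpr F) 0 = of_rat (poly F 0)"
  using poly_mpr_of_rat[of F 0] by simp

lemma poly_mpr_1: "poly (mpr F) 1 = of_rat (poly F 1)"
  using poly_mpr_of_rat[of F 1] by simp

lemma bc_mpr: "bc (mpr F) n k = of_rat (bc F n k)"
  by (simp add: bc_def coeff_mpr of_rat_sum of_rat_mult)

lemma brep_shift:
  "x ^ i * (1 - x) ^ j * brep n a x = brep (n + i + j) (\<lambda>k. if i \<le> k \<and> k \<le> i + n then a (k - i) else 0) x"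
proof -
  let ?b = "\<lambda>k. if i \<le> k \<and> k \<le> i + n then a (k - i) else 0"
  have "brep (n + i + j) ?b x = (\<Sum>k\<in>(\<lambda>m. m + i) ` {..n}. ?b k * x ^ k * (1 - x) ^ (n + i + j - k))"
    unfolding brep_def
  proof (rule sum.mono_neutral_right)
    show "\<forall>k\<in>{..n + i + j} - (\<lambda>m. m + i) ` {..n}. ?b k * x ^ k * (1 - x) ^ (n + i + j - k) = 0"
    proof
      fix k assume k: "k \<in> {..n + i + j} - (\<lambda>m. m + i) ` {..n}"
      have "\<not> (i \<le> k \<and> k \<le> i + n)"
      proof
        assume "i \<le> k \<and> k \<le> i + n"
        then have "k \<in> (\<lambda>m. m + i) ` {..n}" by (intro image_eqI[of _ _ "k - i"]) auto
        then show False using k by blast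
      qed
      then show "?b k * x ^ k * (1 - x) ^ (n + i + j - k) = 0" by auto
    qed
  qed auto
  also have "\<dots> = (\<Sum>m\<le>n. a m * x ^ (m + i) * (1 - x) ^ (n - m + j))"
    by (subst sum.reindex) (auto intro: sum.cong simp: inj_on_def)
  also have "\<dots> = x ^ i * (1 - x) ^ j * brep n a x"
    unfolding brep_def sum_distrib_left
  proof (intro sum.cong refl)
    fix m assume "m \<in> {..n}"
    show "a m * x ^ (m + i) * (1 - x) ^ (n - m + j) = x ^ i * (1 - x) ^ j * (a m * x ^ m * (1 - x) ^ (n - m))"
      by (simp only: power_add mult_ac)
  qed
  finally show ?thesis by simp
qed

lemma order_factor:
  fixes F :: "rat poly"
  assumes "F \<noteq> 0"
  obtains G where "F = [:-a, 1:] ^ order a F * G" "poly G a \<noteq> 0"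
proof -
  obtain G where G: "F = [:-a, 1:] ^ order a F * G" using order_1[of a F] by (elim dvdE)
  have "poly G a \<noteq> 0"
  proof
    assume "poly G a = 0"
    then have "[:-a, 1:] dvd G" by (simp add: poly_eq_0_iff_dvd)
    then have "[:-a, 1:] ^ Suc (order a F) dvd F" using G by (metis mult_dvd_mono power_Suc2 dvd_refl)
    then show False using order_2[OF assms] by blast
  qed
  then show ?thesis using G that by blast
qed

lemma rep_exists:
  fixes F :: "rat poly"
  assumes pos: "\<And>x. 0 < x \<Longrightarrow> x < 1 \<Longrightarrow> 0 < poly (mpr F) x"
  shows "\<exists>n0. \<forall>n\<ge>n0. \<exists>a::nat \<Rightarrow> rat. (\<forall>k. 0 \<le> a k) \<and> (\<forall>x. poly (mpr F) x = brep n (\<lambda>k. of_rat (a k)) x)"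
proof -
  have F0: "F \<noteq> 0" using pos[of "1/2"] by auto
  obtain G where G: "F = [:-0, 1:] ^ order 0 F * G" "poly G 0 \<noteq> 0" using order_factor[OF F0] by blast
  define i where "i = order 0 F"
  have G0: "G \<noteq> 0" using G by auto
  obtain H where H: "G = [:-1, 1:] ^ order 1 G * H" "poly H 1 \<noteq> 0" using order_factor[OF G0] by blast
  define j where "j = order 1 G"
  have H0: "poly H 0 \<noteq> 0" using G(2) H(1) by (metis mult_zero_right poly_mult)
  define H2 where "H2 = [:(-1) ^ j:] * H"
  have evF: "poly (mpr F) x = x ^ i * (1 - x) ^ j * poly (mpr H2) x" for x
  proof -
    have "poly (mpr F) x = x ^ i * (x - 1) ^ j * poly (mpr H) x"
      using G(1) H(1) unfolding i_def[symmetric] j_def[symmetric]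
      by (simp add: mpr_mult mpr_power mpr_lin mpr_lin1)
    also have "(x - 1) ^ j = (-1) ^ j * (1 - x) ^ j"
      by (simp add: power_mult_distrib[symmetric])
    finally show ?thesis unfolding H2_def by (simp add: mpr_mult mpr_smult mult_ac of_rat_power)
  qed
  have posH: "0 < poly (mpr H2) x" if "0 < x" "x < 1" for x
  proof -
    have "0 < x ^ i * (1 - x) ^ j" using that by simp
    moreover have "0 < x ^ i * (1 - x) ^ j * poly (mpr H2) x" using pos[OF that] evF by simp
    ultimately show ?thesis using zero_less_mult_pos by blast
  qed
  have nz0: "poly (mpr H2) 0 \<noteq> 0" using H0 unfolding H2_def poly_mpr_0 by simp
  have nz1: "poly (mpr H2) 1 \<noteq> 0" using H(2) unfolding H2_def poly_mpr_1 by simp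
  have p0: "0 < poly (mpr H2) 0"
  proof (rule ccontr)
    assume "\<not> 0 < poly (mpr H2) 0"
    then have "poly (mpr H2) 0 < 0" using nz0 by linarith
    then obtain z where "0 < z" "z < 1/2" "poly (mpr H2) z = 0"
      using poly_IVT_pos[of 0 "1/2" "mpr H2"] posH[of "1/2"] by auto
    then show False using posH[of z] by simp
  qed
  have p1: "0 < poly (mpr H2) 1"
  proof (rule ccontr)
    assume "\<not> 0 < poly (mpr H2) 1"
    then have "poly (mpr H2) 1 < 0" using nz1 by linarith
    then obtain z where "1/2 < z" "z < 1" "poly (mpr H2) z = 0"
      using poly_IVT_neg[of "1/2" 1 "mpr H2"] posH[of "1/2"] by auto
    then show False using posH[of z] by simp
  qed
  have posC: "0 < poly (mpr H2) x" if "0 \<le> x" "x \<le> 1" for x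
    using that p0 p1 posH by (cases "x = 0"; cases "x = 1") auto
  obtain n1 where n1: "\<And>n k. n1 \<le> n \<Longrightarrow> k \<le> n \<Longrightarrow> 0 \<le> bc (mpr H2) n k"
    using bc_nonneg_eventually[OF posC] by blast
  define n0 where "n0 = max n1 (degree H2)"
  show ?thesis
  proof (rule exI[of _ "n0 + i + j"], intro allI impI)
    fix N assume N: "n0 + i + j \<le> N"
    define n where "n = N - i - j"
    have Nn: "N = n + i + j" and nn: "n0 \<le> n" using N by (auto simp: n_def)
    define a where "a k = (if i \<le> k \<and> k \<le> i + n then bc H2 n (k - i) else 0)" for k
    have "\<forall>k. 0 \<le> a k"
    proof
      fix k
      have "k - i \<le> n \<Longrightarrow> 0 \<le> bc (mpr H2) n (k - i)" using n1 nn by (simp add: n0_def)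
      then show "0 \<le> a k" by (auto simp: a_def bc_mpr zero_le_of_rat_iff)
    qed
    moreover have "\<forall>x. poly (mpr F) x = brep N (\<lambda>k. of_rat (a k)) x"
    proof
      fix x :: real
      have "poly (mpr H2) x = brep n (bc (mpr H2) n) x"
        using nn by (intro bc_rep) (simp add: degree_mpr n0_def)
      then have "poly (mpr F) x = x ^ i * (1 - x) ^ j * brep n (\<lambda>k. of_rat (bc H2 n k)) x"
        using ext[of "bc (mpr H2) n" "\<lambda>k. of_rat (bc H2 n k)", OF bc_mpr] by (simp add: evF)
      also have "\<dots> = brep N (\<lambda>k. of_rat (a k)) x"
        unfolding brep_shift Nn a_def by (intro brep_cong) auto
      finally show "poly (mpr F) x = brep N (\<lambda>k. of_rat (a k)) x" .
    qed
    ultimately show "\<exists>a. (\<forall>k. 0 \<le> a k) \<and> (\<forall>x. poly (mpr F) x = brep N (\<lambda>k. of_rat (a k)) x)" by blast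
  qed
qed

lemma n01: "n0 w + n1 w = length w"
  by (induction w) (auto simp: n0_def n1_def)

definition Wk :: "nat \<Rightarrow> nat \<Rightarrow> bool list set" where
  "Wk N k = {w \<in> words N. n1 w = k}"

lemma finite_Wk[simp]: "finite (Wk N k)" unfolding Wk_def by simp

lemma card_Wk: "N choose k \<le> card (Wk N k)"
proof -
  define g where "g A = map (\<lambda>i. i \<in> A) [0..<N]" for A :: "nat set"
  let ?S = "{A. A \<subseteq> {0..<N} \<and> card A = k}"
  have "card ?S = N choose k" using n_subsets[of "{0..<N}" k] by simp
  moreover have "card ?S \<le> card (Wk N k)"
  proof (rule card_inj_on_le)
    show "inj_on g ?S"
    proof (rule inj_onI)
      fix A B assume A: "A \<in> ?S" and B: "B \<in> ?S" and e: "g A = g B"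
      have "\<forall>i<N. (i \<in> A) = (i \<in> B)"
      proof (intro allI impI)
        fix i assume "i < N"
        then show "(i \<in> A) = (i \<in> B)" using arg_cong[OF e, of "\<lambda>l. l ! i"] by (simp add: g_def)
      qed
      note h = this
      show "A = B"
      proof (rule set_eqI)
        fix i
        show "(i \<in> A) = (i \<in> B)"
        proof (cases "i < N")
          case True then show ?thesis using h by blast
        next
          case False
          then have "i \<notin> A" "i \<notin> B" using A B by auto
          then show ?thesis by blast
        qed
      qed
    qed
    show "g ` ?S \<subseteq> Wk N k"
    proof
      fix w assume "w \<in> g ` ?S"
      then obtain A where A: "A \<in> ?S" "w = g A" by blast
      have "n1 w = length (filter (\<lambda>i. i \<in> A) [0..<N])"
        using A by (simp add: n1_def g_def filter_map comp_def)
      also have "\<dots> = card (set (filter (\<lambda>i. i \<in> A) [0..<N]))"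
        by (rule distinct_card[symmetric]) simp
      also have "set (filter (\<lambda>i. i \<in> A) [0..<N]) = A"
      proof -
        have "A \<subseteq> {0..<N}" using A by blast
        then show ?thesis by auto
      qed
      finally show "w \<in> Wk N k" using A by (simp add: Wk_def words_def g_def)
    qed
  qed simp
  ultimately show ?thesis by simp
qed

lemma Pword_Wk: "w \<in> Wk N k \<Longrightarrow> Pword x w = x ^ k * (1 - x) ^ (N - k)"
proof -
  assume w: "w \<in> Wk N k"
  then have "n0 w = N - k" using n01[of w] by (simp add: Wk_def words_def)
  then show ?thesis using w by (simp add: Wk_def Pword_def)
qed

lemma sum_sel:
  assumes S: "\<And>k. k \<le> N \<Longrightarrow> S k \<subseteq> Wk N k"
  shows "(\<Sum>w\<in>words N. if w \<in> S (n1 w) then Pword x w else 0) = brep N (\<lambda>k. real (card (S k))) x"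
proof -
  have fin: "finite (S k)" if "k \<le> N" for k by (rule finite_subset[OF S[OF that]]) simp
  have n1N: "n1 w \<le> N" if "w \<in> words N" for w
    using that n01[of w] by (simp add: words_def)
  have set: "{w \<in> words N. w \<in> S (n1 w)} = (\<Union>k\<in>{..N}. S k)"
  proof
    show "{w \<in> words N. w \<in> S (n1 w)} \<subseteq> (\<Union>k\<in>{..N}. S k)"
    proof
      fix w assume "w \<in> {w \<in> words N. w \<in> S (n1 w)}"
      then show "w \<in> (\<Union>k\<in>{..N}. S k)" using n1N[of w] by blast
    qed
    show "(\<Union>k\<in>{..N}. S k) \<subseteq> {w \<in> words N. w \<in> S (n1 w)}"
    proof
      fix w assume "w \<in> (\<Union>k\<in>{..N}. S k)"
      then obtain k where k: "k \<le> N" "w \<in> S k" by blast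
      then have "w \<in> Wk N k" using S[OF k(1)] by blast
      then show "w \<in> {w \<in> words N. w \<in> S (n1 w)}" using k by (simp add: Wk_def)
    qed
  qed
  have "(\<Sum>w\<in>words N. if w \<in> S (n1 w) then Pword x w else 0) = (\<Sum>w\<in>{w \<in> words N. w \<in> S (n1 w)}. Pword x w)"
    by (rule sum.inter_filter[symmetric]) simp
  also have "\<dots> = (\<Sum>k\<le>N. \<Sum>w\<in>S k. Pword x w)"
    unfolding set
  proof (rule sum.UNION_disjoint)
    show "\<forall>i\<in>{..N}. \<forall>j\<in>{..N}. i \<noteq> j \<longrightarrow> S i \<inter> S j = {}"
    proof (intro ballI impI)
      fix i j assume i: "i \<in> {..N}" and j: "j \<in> {..N}" and ij: "i \<noteq> j"
      have "Wk N i \<inter> Wk N j = {}" using ij by (auto simp: Wk_def)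
      then show "S i \<inter> S j = {}" using S[of i] S[of j] i j by blast
    qed
  qed (simp, use fin in blast)
  also have "\<dots> = (\<Sum>k\<le>N. real (card (S k)) * x ^ k * (1 - x) ^ (N - k))"
  proof (intro sum.cong refl)
    fix k assume "k \<in> {..N}"
    then have Sk: "S k \<subseteq> Wk N k" using S by simp
    have "\<And>w. w \<in> S k \<Longrightarrow> Pword x w = x ^ k * (1 - x) ^ (N - k)"
      using Sk by (intro Pword_Wk) blast
    then show "(\<Sum>w\<in>S k. Pword x w) = real (card (S k)) * x ^ k * (1 - x) ^ (N - k)" by simp
  qed
  finally show ?thesis unfolding brep_def .
qed

lemma select:
  assumes cnt: "\<And>k. k \<le> N \<Longrightarrow> cA k + cB k + cC k \<le> N choose k"
  shows "\<exists>Dec. \<forall>x. pio N Dec x ONE = brep N (\<lambda>k. real (cA k)) x \<and>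
     pio N Dec x REC = brep N (\<lambda>k. real (cB k)) x \<and> pio N Dec x ZERO = brep N (\<lambda>k. real (cC k)) x"
proof -
  have ex: "\<exists>T. k \<le> N \<longrightarrow> (fst T \<subseteq> Wk N k \<and> fst (snd T) \<subseteq> Wk N k \<and> snd (snd T) \<subseteq> Wk N k \<and>
     fst T \<inter> fst (snd T) = {} \<and> fst T \<inter> snd (snd T) = {} \<and> fst (snd T) \<inter> snd (snd T) = {} \<and>
     card (fst T) = cA k \<and> card (fst (snd T)) = cB k \<and> card (snd (snd T)) = cC k)" for k
  proof (cases "k \<le> N")
    case True
    have c: "cA k + cB k + cC k \<le> card (Wk N k)" using cnt[OF True] card_Wk[of N k] by linarith
    obtain T1 where T1: "T1 \<subseteq> Wk N k" "card T1 = cA k" "finite T1"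
      using obtain_subset_with_card_n[of "cA k" "Wk N k"] c by auto
    have c2: "cB k + cC k \<le> card (Wk N k - T1)" using c T1 by (simp add: card_Diff_subset)
    obtain T2 where T2: "T2 \<subseteq> Wk N k - T1" "card T2 = cB k" "finite T2"
      using obtain_subset_with_card_n[of "cB k" "Wk N k - T1"] c2 by auto
    have c3: "cC k \<le> card (Wk N k - T1 - T2)" using c2 T2 by (simp add: card_Diff_subset)
    obtain T3 where T3: "T3 \<subseteq> Wk N k - T1 - T2" "card T3 = cC k" "finite T3"
      using obtain_subset_with_card_n[of "cC k" "Wk N k - T1 - T2"] c3 by auto
    show ?thesis using T1 T2 T3 by (intro exI[of _ "(T1, T2, T3)"]) auto
  qed simp
  obtain T where T: "\<And>k. k \<le> N \<Longrightarrow> fst (T k) \<subseteq> Wk N k \<and> fst (snd (T k)) \<subseteq> Wk N k \<and> snd (snd (T k)) \<subseteq> Wk N k \<and>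
     fst (T k) \<inter> fst (snd (T k)) = {} \<and> fst (T k) \<inter> snd (snd (T k)) = {} \<and> fst (snd (T k)) \<inter> snd (snd (T k)) = {} \<and>
     card (fst (T k)) = cA k \<and> card (fst (snd (T k))) = cB k \<and> card (snd (snd (T k))) = cC k"
    using ex by metis
  define SA where "SA k = fst (T k)" for k
  define SB where "SB k = fst (snd (T k))" for k
  define SC where "SC k = snd (snd (T k))" for k
  define Dec where "Dec w = (if w \<in> SA (n1 w) then ONE else if w \<in> SB (n1 w) then REC
      else if w \<in> SC (n1 w) then ZERO else RETRY)" for w
  have n1N: "n1 w \<le> N" if "w \<in> words N" for w
    using that n01[of w] by (simp add: words_def)
  have dA: "Dec w = ONE \<longleftrightarrow> w \<in> SA (n1 w)" for w by (simp add: Dec_def)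
  have dB: "w \<in> words N \<Longrightarrow> Dec w = REC \<longleftrightarrow> w \<in> SB (n1 w)" for w
    using T[OF n1N, of w] by (auto simp: Dec_def SA_def SB_def)
  have dC: "w \<in> words N \<Longrightarrow> Dec w = ZERO \<longleftrightarrow> w \<in> SC (n1 w)" for w
    using T[OF n1N, of w] by (auto simp: Dec_def SA_def SB_def SC_def)
  show ?thesis
  proof (intro exI allI conjI)
    fix x
    have "pio N Dec x ONE = (\<Sum>w\<in>words N. if w \<in> SA (n1 w) then Pword x w else 0)"
      unfolding pio_def using dA by simp
    also have "\<dots> = brep N (\<lambda>k. real (card (SA k))) x" by (rule sum_sel) (use T in \<open>auto simp: SA_def\<close>)
    also have "\<dots> = brep N (\<lambda>k. real (cA k)) x" by (rule brep_cong) (use T in \<open>auto simp: SA_def\<close>)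
    finally show "pio N Dec x ONE = brep N (\<lambda>k. real (cA k)) x" .
    have "pio N Dec x REC = (\<Sum>w\<in>words N. if w \<in> SB (n1 w) then Pword x w else 0)"
      unfolding pio_def using dB by (intro sum.cong) auto
    also have "\<dots> = brep N (\<lambda>k. real (card (SB k))) x" by (rule sum_sel) (use T in \<open>auto simp: SB_def\<close>)
    also have "\<dots> = brep N (\<lambda>k. real (cB k)) x" by (rule brep_cong) (use T in \<open>auto simp: SB_def\<close>)
    finally show "pio N Dec x REC = brep N (\<lambda>k. real (cB k)) x" .
    have "pio N Dec x ZERO = (\<Sum>w\<in>words N. if w \<in> SC (n1 w) then Pword x w else 0)"
      unfolding pio_def using dC by (intro sum.cong) auto
    also have "\<dots> = brep N (\<lambda>k. real (card (SC k))) x" by (rule sum_sel) (use T in \<open>auto simp: SC_def\<close>)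
    also have "\<dots> = brep N (\<lambda>k. real (cC k)) x" by (rule brep_cong) (use T in \<open>auto simp: SC_def\<close>)
    finally show "pio N Dec x ZERO = brep N (\<lambda>k. real (cC k)) x" .
  qed
qed

lemma rat_common_denom:
  fixes S :: "rat set"
  assumes "finite S"
  shows "\<exists>K::nat. 0 < K \<and> (\<forall>q\<in>S. \<exists>z::int. of_nat K * q = of_int z)"
  using assms
proof (induction S rule: finite_induct)
  case empty then show ?case by (intro exI[of _ 1]) simp
next
  case (insert q S)
  obtain K where K: "0 < K" "\<forall>q\<in>S. \<exists>z::int. of_nat K * q = of_int z" using insert.IH by blast
  obtain a b where ab: "quotient_of q = (a, b)" by force
  have b: "b > 0" using quotient_of_denom_pos[OF ab] .
  have qab: "q = of_int a / of_int b" using quotient_of_div[OF ab] .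
  define K' where "K' = K * nat b"
  have "0 < K'" using K b by (simp add: K'_def)
  moreover have "\<forall>q'\<in>insert q S. \<exists>z::int. of_nat K' * q' = of_int z"
  proof
    fix q' assume "q' \<in> insert q S"
    then show "\<exists>z::int. of_nat K' * q' = of_int z"
    proof
      assume "q' = q"
      then have "of_nat K' * q' = of_int (int K * a)" using b by (simp add: K'_def qab)
      then show ?thesis by blast
    next
      assume "q' \<in> S"
      then obtain z where "of_nat K * q' = of_int z" using K by blast
      then have "of_nat K' * q' = of_int (b * z)" using b
        by (simp add: K'_def)
      then show ?thesis by blast
    qed
  qed
  ultimately show ?case by blast
qed

lemma brep_scale: "c * brep n a x = brep n (\<lambda>k. c * a k) x"
  unfolding brep_def by (simp add: sum_distrib_left mult_ac)

lemma reps3: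
  fixes A B C :: "rat poly"
  assumes pA: "\<And>x. 0 < x \<Longrightarrow> x < 1 \<Longrightarrow> 0 < poly (mpr A) x"
    and pB: "\<And>x. 0 < x \<Longrightarrow> x < 1 \<Longrightarrow> 0 < poly (mpr B) x"
    and pC: "\<And>x. 0 < x \<Longrightarrow> x < 1 \<Longrightarrow> 0 < poly (mpr C) x"
  shows "\<exists>n bA bB bC (K::nat). 0 < K \<and> (\<forall>x. real K * poly (mpr A) x = brep n (\<lambda>k. real (bA k)) x \<and>
     real K * poly (mpr B) x = brep n (\<lambda>k. real (bB k)) x \<and> real K * poly (mpr C) x = brep n (\<lambda>k. real (bC k)) x)"
proof -
  obtain nA where nA: "\<And>n. nA \<le> n \<Longrightarrow> \<exists>a::nat\<Rightarrow>rat. (\<forall>k. 0 \<le> a k) \<and> (\<forall>x. poly (mpr A) x = brep n (\<lambda>k. of_rat (a k)) x)"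
    using rep_exists[OF pA] by blast
  obtain nB where nB: "\<And>n. nB \<le> n \<Longrightarrow> \<exists>a::nat\<Rightarrow>rat. (\<forall>k. 0 \<le> a k) \<and> (\<forall>x. poly (mpr B) x = brep n (\<lambda>k. of_rat (a k)) x)"
    using rep_exists[OF pB] by blast
  obtain nC where nC: "\<And>n. nC \<le> n \<Longrightarrow> \<exists>a::nat\<Rightarrow>rat. (\<forall>k. 0 \<le> a k) \<and> (\<forall>x. poly (mpr C) x = brep n (\<lambda>k. of_rat (a k)) x)"
    using rep_exists[OF pC] by blast
  define n where "n = max nA (max nB nC)"
  obtain aA where aA: "\<forall>k. 0 \<le> aA k" "\<forall>x. poly (mpr A) x = brep n (\<lambda>k. of_rat (aA k)) x"
    using nA[of n] unfolding n_def by fastforce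
  obtain aB where aB: "\<forall>k. 0 \<le> aB k" "\<forall>x. poly (mpr B) x = brep n (\<lambda>k. of_rat (aB k)) x"
    using nB[of n] unfolding n_def by fastforce
  obtain aC where aC: "\<forall>k. 0 \<le> aC k" "\<forall>x. poly (mpr C) x = brep n (\<lambda>k. of_rat (aC k)) x"
    using nC[of n] unfolding n_def by fastforce
  obtain K where K: "0 < K" "\<forall>q\<in>aA ` {..n} \<union> aB ` {..n} \<union> aC ` {..n}. \<exists>z::int. of_nat K * q = of_int z"
    using rat_common_denom[of "aA ` {..n} \<union> aB ` {..n} \<union> aC ` {..n}"] by auto
  define cv where "cv a k = nat \<lfloor>of_nat K * (a k :: rat)\<rfloor>" for a and k :: nat
  have cvr: "real (cv a k) = real K * of_rat (a k)" if a0: "0 \<le> a k" and az: "\<exists>z::int. of_nat K * a k = of_int z" for a k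
  proof -
    obtain z where z: "of_nat K * a k = of_int z" using az by blast
    have "0 \<le> of_nat K * a k" using a0 by simp
    then have z0: "0 \<le> z" using z by simp
    have "real (cv a k) = real_of_int z" using z z0 by (simp add: cv_def)
    also have "\<dots> = of_rat (of_int z)" by simp
    also have "\<dots> = real K * of_rat (a k)" unfolding z[symmetric] by (simp add: of_rat_mult)
    finally show ?thesis .
  qed
  have conv: "real K * brep n (\<lambda>k. of_rat (a k)) x = brep n (\<lambda>k. real (cv a k)) x"
    if "\<forall>k. 0 \<le> a k" "\<forall>k\<le>n. \<exists>z::int. of_nat K * a k = of_int z" for a x
    unfolding brep_scale using that cvr by (intro brep_cong) auto
  show ?thesis
  proof (intro exI conjI allI)
    show "0 < K" by (rule K(1))
    fix x
    show "real K * poly (mpr A) x = brep n (\<lambda>k. real (cv aA k)) x"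
      unfolding aA(2)[rule_format] using aA(1) K(2) by (intro conv) auto
    show "real K * poly (mpr B) x = brep n (\<lambda>k. real (cv aB k)) x"
      unfolding aB(2)[rule_format] using aB(1) K(2) by (intro conv) auto
    show "real K * poly (mpr C) x = brep n (\<lambda>k. real (cv aC k)) x"
      unfolding aC(2)[rule_format] using aC(1) K(2) by (intro conv) auto
  qed
qed

lemma central_binom: "2 ^ s \<le> ((s + s) choose s)"
proof (cases "s = 0")
  case True then show ?thesis by simp
next
  case False
  have "(real (s + s) / real s) ^ s \<le> real ((s + s) choose s)"
    by (rule binomial_ge_n_over_k_pow_k) simp
  moreover have "real (s + s) / real s = 2" using False by simp
  ultimately have "real (2 ^ s) \<le> real ((s + s) choose s)" by simp
  then show ?thesis by linarith
qed

lemma dec_exists: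
  fixes A B C :: "rat poly"
  assumes pA: "\<And>x. 0 < x \<Longrightarrow> x < 1 \<Longrightarrow> 0 < poly (mpr A) x"
    and pB: "\<And>x. 0 < x \<Longrightarrow> x < 1 \<Longrightarrow> 0 < poly (mpr B) x"
    and pC: "\<And>x. 0 < x \<Longrightarrow> x < 1 \<Longrightarrow> 0 < poly (mpr C) x"
  shows "\<exists>N Dec c. 0 < N \<and> (\<forall>x. 0 < x \<longrightarrow> x < 1 \<longrightarrow> 0 < c x \<and>
     pio N Dec x ONE = c x * poly (mpr A) x \<and> pio N Dec x REC = c x * poly (mpr B) x \<and>
     pio N Dec x ZERO = c x * poly (mpr C) x)"
proof -
  obtain n bA bB bC and K :: nat where K: "0 < K" and
    rA: "\<And>x. real K * poly (mpr A) x = brep n (\<lambda>k. real (bA k)) x" and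
    rB: "\<And>x. real K * poly (mpr B) x = brep n (\<lambda>k. real (bB k)) x" and
    rC: "\<And>x. real K * poly (mpr C) x = brep n (\<lambda>k. real (bC k)) x"
    using reps3[OF pA pB pC] by blast
  define M where "M = (\<Sum>k\<le>n. bA k + bB k + bC k)"
  define s where "s = Suc M"
  define N where "N = n + s + s"
  define sh where "sh b k = (if s \<le> k \<and> k \<le> s + n then b (k - s) else (0::nat))" for b and k :: nat
  have cnt: "sh bA k + sh bB k + sh bC k \<le> N choose k" if kN: "k \<le> N" for k
  proof (cases "s \<le> k \<and> k \<le> s + n")
    case True
    then have "sh bA k + sh bB k + sh bC k = bA (k - s) + bB (k - s) + bC (k - s)" by (simp add: sh_def)
    also have "\<dots> \<le> M" unfolding M_def using True by (intro member_le_sum) auto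
    also have "M < 2 ^ s" unfolding s_def using less_exp[of M] by (simp del: less_exp)
    also have "2 ^ s \<le> (s + s) choose s" by (rule central_binom)
    also have "\<dots> \<le> ((s + s) choose s) * (n choose (k - s))"
    proof -
      have "k - s \<le> n" using True by linarith
      then have "1 \<le> n choose (k - s)" by (simp add: Suc_le_eq)
      then show ?thesis by simp
    qed
    also have "\<dots> \<le> (\<Sum>i\<le>k. ((s + s) choose i) * (n choose (k - i)))"
      using True by (intro member_le_sum[where f="\<lambda>i. ((s + s) choose i) * (n choose (k - i))" and i=s]) auto
    also have "\<dots> = N choose k" unfolding vandermonde N_def by (simp add: add_ac)
    finally show ?thesis by simp
  next
    case False
    then have "sh bA k = 0" "sh bB k = 0" "sh bC k = 0" by (simp_all only: sh_def if_False)
    then show ?thesis by simp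
  qed
  obtain Dec where Dec: "\<And>x. pio N Dec x ONE = brep N (\<lambda>k. real (sh bA k)) x \<and>
     pio N Dec x REC = brep N (\<lambda>k. real (sh bB k)) x \<and> pio N Dec x ZERO = brep N (\<lambda>k. real (sh bC k)) x"
    using select[of N "sh bA" "sh bB" "sh bC", OF cnt] by blast
  have shr: "brep N (\<lambda>k. real (sh b k)) x = x ^ s * (1 - x) ^ s * (real K * poly (mpr F) x)"
    if "real K * poly (mpr F) x = brep n (\<lambda>k. real (b k)) x" for b F x
    unfolding that brep_shift N_def by (intro brep_cong) (auto simp: sh_def add_ac)
  define c where "c x = x ^ s * (1 - x) ^ s * real K" for x :: real
  show ?thesis
  proof (intro exI conjI allI impI)
    show "0 < N" by (simp add: N_def s_def)
    fix x :: real assume x: "0 < x" "x < 1"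
    show "0 < c x" using x K by (simp add: c_def)
    show "pio N Dec x ONE = c x * poly (mpr A) x" using Dec shr[OF rA] by (simp add: c_def)
    show "pio N Dec x REC = c x * poly (mpr B) x" using Dec shr[OF rB] by (simp add: c_def)
    show "pio N Dec x ZERO = c x * poly (mpr C) x" using Dec shr[OF rC] by (simp add: c_def)
  qed
qed

lemma gamma_facts:
  fixes g :: real
  assumes g: "0 < g" "g < 1/2"
  shows "2 * ((1 - sqrt (1 - 2 * g)) / (2 * g)) = 1 + 2 * g * ((1 - sqrt (1 - 2 * g)) / (2 * g)) ^ 2
    \<and> 0 \<le> (1 - sqrt (1 - 2 * g)) / (2 * g) \<and> (1 - sqrt (1 - 2 * g)) / (2 * g) \<le> 1"
proof -
  define t where "t = sqrt (1 - 2 * g)"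
  have t2: "t * t = 1 - 2 * g" using g by (simp add: t_def)
  have t0: "0 \<le> t" using g by (simp add: t_def)
  have t1: "t < 1" using g by (simp add: t_def real_sqrt_lt_1_iff)
  have gt: "2 * g = (1 - t) * (1 + t)" using t2 by (simp add: algebra_simps)
  have ga: "(1 - sqrt (1 - 2 * g)) / (2 * g) = 1 / (1 + t)"
  proof -
    have "1 - t \<noteq> 0" "1 + t \<noteq> 0" using t0 t1 by auto
    moreover have "t * t \<noteq> 1" using t0 t1 mult_strict_mono[of t 1 t 1] by auto
    then show ?thesis unfolding t_def[symmetric] unfolding gt using t1 by simp
  qed
  have d: "1 + t > 0" using t0 by simp
  have e1: "(1 - t) * (1 + t) * (1 / (1 + t)) ^ 2 = (1 - t) / (1 + t)"
    using d by (simp add: power2_eq_square)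
  have e2: "1 + (1 - t) / (1 + t) = 2 * (1 / (1 + t))"
    using d by (simp add: field_simps)
  have "2 * (1 / (1 + t)) = 1 + (1 - t) * (1 + t) * (1 / (1 + t)) ^ 2"
    unfolding e1 e2 ..
  moreover have "0 \<le> 1 / (1 + t)" "1 / (1 + t) \<le> 1" using d t0 by auto
  ultimately show ?thesis unfolding ga unfolding gt by blast
qed

lemma mpr_diff: "mpr (p - q) = mpr p - mpr q"
  by (rule poly_eqI) (simp add: coeff_mpr of_rat_diff)

lemma part_a:
  fixes P Q :: "rat poly"
  assumes hyp: "\<forall>p\<in>{0<..<1::real}. poly (map_poly of_rat Q) p \<noteq> 0 \<and>
               0 < poly (map_poly of_rat P) p / poly (map_poly of_rat Q) p \<and>
               poly (map_poly of_rat P) p / poly (map_poly of_rat Q) p < 1/2"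
  shows "\<exists>M. wf_pda M \<and>
               pda_simulates M
                 (\<lambda>p. let g = poly (map_poly of_rat P) p / poly (map_poly of_rat Q) p
                      in (1 - sqrt (1 - 2 * g)) / (2 * g))
                 {0<..<1}"
proof -
  define A where "A = Q * Q"
  define B where "B = smult 2 (P * Q)"
  define C where "C = Q * Q - smult 2 (P * Q)"
  have ev: "poly (mpr A) x = poly (mpr Q) x * poly (mpr Q) x \<and>
      poly (mpr B) x = 2 * (poly (mpr P) x / poly (mpr Q) x) * poly (mpr Q) x * poly (mpr Q) x \<and>
      poly (mpr C) x = poly (mpr Q) x * poly (mpr Q) x - 2 * (poly (mpr P) x / poly (mpr Q) x) * poly (mpr Q) x * poly (mpr Q) x"
    if x: "0 < x" "x < 1" for x
  proof -
    have q: "poly (mpr Q) x \<noteq> 0" using hyp x by auto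
    show ?thesis unfolding A_def B_def C_def using q
      by (simp add: mpr_mult mpr_smult mpr_diff)
  qed
  have pos: "0 < poly (mpr A) x \<and> 0 < poly (mpr B) x \<and> 0 < poly (mpr C) x" if x: "0 < x" "x < 1" for x
  proof -
    have q: "poly (mpr Q) x \<noteq> 0" and g: "0 < poly (mpr P) x / poly (mpr Q) x" "poly (mpr P) x / poly (mpr Q) x < 1/2"
      using hyp x by auto
    define q' where "q' = poly (mpr Q) x"
    define g where "g = poly (mpr P) x / poly (mpr Q) x"
    have qq: "0 < q' * q'" using q unfolding q'_def by (auto simp: zero_less_mult_iff linorder_neq_iff)
    have g0: "0 < g" "g < 1/2" using g by (simp_all add: g_def)
    have "0 < (2 * g) * (q' * q')" using qq g0 by simp
    then have "0 < 2 * g * q' * q'" by (simp add: mult.assoc)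
    moreover have "0 < q' * q' - 2 * g * q' * q'"
    proof -
      have "0 < q' * q' * (1 - 2 * g)" using qq g0 by simp
      then show ?thesis by (simp add: algebra_simps)
    qed
    ultimately show ?thesis using ev[OF x] qq unfolding q'_def g_def by simp
  qed
  obtain N Dec c where N: "0 < N" and D: "\<And>x. 0 < x \<Longrightarrow> x < 1 \<Longrightarrow> 0 < c x \<and>
     pio N Dec x ONE = c x * poly (mpr A) x \<and> pio N Dec x REC = c x * poly (mpr B) x \<and>
     pio N Dec x ZERO = c x * poly (mpr C) x"
    using dec_exists[of A B C] pos by blast
  let ?y = "\<lambda>p. let g = poly (map_poly of_rat P) p / poly (map_poly of_rat Q) p
                      in (1 - sqrt (1 - 2 * g)) / (2 * g)"
  have "pda_simulates (mach N Dec) ?y {0<..<1}"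
  proof (rule mach_sim(1)[OF N])
    fix p :: real assume "p \<in> {0<..<1}"
    then have p: "0 < p" "p < 1" by auto
    define g where "g = poly (mpr P) p / poly (mpr Q) p"
    define q where "q = poly (mpr Q) p"
    define \<gamma> where "\<gamma> = (1 - sqrt (1 - 2 * g)) / (2 * g)"
    have yg: "?y p = \<gamma>" by (simp add: g_def \<gamma>_def Let_def)
    have g: "0 < g" "g < 1/2" using hyp p by (auto simp: g_def)
    have gf: "2 * \<gamma> = 1 + 2 * g * \<gamma> ^ 2" "0 \<le> \<gamma>" "\<gamma> \<le> 1"
      using gamma_facts[OF g] unfolding \<gamma>_def by auto
    obtain cp where cp: "0 < cp" "pio N Dec p ONE = cp * (q * q)" "pio N Dec p REC = cp * (2 * g * q * q)"
      "pio N Dec p ZERO = cp * (q * q - 2 * g * q * q)"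
      using D[OF p] ev[OF p] unfolding g_def q_def by auto
    have Z: "0 < pio N Dec p ZERO" using pos[OF p] D[OF p] by simp
    have "\<gamma> * (pio N Dec p ONE + pio N Dec p REC + pio N Dec p ZERO) = cp * (q * q) * (2 * \<gamma>)"
      unfolding cp by (simp add: algebra_simps)
    also have "\<dots> = cp * (q * q) * (1 + 2 * g * \<gamma> ^ 2)" using gf by simp
    also have "\<dots> = pio N Dec p ONE + pio N Dec p REC * \<gamma> ^ 2"
      unfolding cp by (simp add: algebra_simps)
    finally have eq: "\<gamma> * (pio N Dec p ONE + pio N Dec p REC + pio N Dec p ZERO) = pio N Dec p ONE + pio N Dec p REC * \<gamma> ^ 2" .
    show "0 \<le> p \<and> p \<le> 1 \<and> 0 < pio N Dec p ZERO \<and> 0 \<le> ?y p \<and> ?y p \<le> 1 \<and>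
      ?y p * (pio N Dec p ONE + pio N Dec p REC + pio N Dec p ZERO) = pio N Dec p ONE + pio N Dec p REC * (?y p) ^ 2"
      unfolding yg using p Z gf eq by simp
  qed
  then show ?thesis using wf_mach[OF N] by blast
qed

theorem mainTheorem11:
  shows "(\<forall>P Q :: rat poly.
            (\<forall>p\<in>{0<..<1::real}. poly (map_poly of_rat Q) p \<noteq> 0 \<and>
               0 < poly (map_poly of_rat P) p / poly (map_poly of_rat Q) p \<and>
               poly (map_poly of_rat P) p / poly (map_poly of_rat Q) p < 1/2) \<longrightarrow>
            (\<exists>M. wf_pda M \<and>
               pda_simulates M
                 (\<lambda>p. let g = poly (map_poly of_rat P) p / poly (map_poly of_rat Q) p
                      in (1 - sqrt (1 - 2 * g)) / (2 * g))
                 {0<..<1}))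
       \<and> (\<exists>M. wf_pda M \<and> pda_simulates M sqrt {0<..<1})"
  using part_a part_b by blast

end
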